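(* Let $n\geqslant 1$, let $\mathcal{H}_1,\ldots,\mathcal{H}_n,\mathcal{H}$ be complex Hilbert spaces, and for $k=1,\ldots,n$ let $A_k:\mathcal{H}_k\to\mathcal{H}$ be a bounded linear operator with closed range $Ran(A_k)$. Suppose that positive reals $\gamma_1,\ldots,\gamma_n$ and reals $\varepsilon_{i,j}$ ($i\neq j$) with $\varepsilon_{i,j}=\varepsilon_{j,i}$ satisfy (1) $\gamma_e(A_k)\geqslant\gamma_k>0$ for $k=1,\ldots,n$; (2) $\|A_i^*A_j\|_e\leqslant\varepsilon_{i,j}$ for all $i\neq j$. Define the real symmetric $n\times n$ matrix $M=(m_{i,j})$ by $m_{i,i}=\gamma_i^2$ and $m_{i,j}=-\varepsilon_{i,j}$ for $i\neq j$. If $M$ is positive definite, then the subspaces $Ran(A_1),\ldots,Ran(A_n)$ are essentially linearly independent and their sum $\sum_{k=1}^n Ran(A_k)=\{\sum_{k=1}^n A_kx_k\mid x_k\in\mathcal{H}_k\}$ is closed in $\mathcal{H}$.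
   Context: For a bounded linear operator $T:\mathcal{X}\to\mathcal{Y}$ between Hilbert spaces, $\|T\|_e=\inf\{\|T+K\|\mid K:\mathcal{X}\to\mathcal{Y}\text{ compact}\}$ is the essential norm. Essential reduced minimum modulus: for a bounded linear operator $A:\mathcal{H}_1\to\mathcal{H}_2$ with $A\neq 0$, let $B=A^*A\upharpoonright_{\mathcal{H}_1\ominus Ker(A)}$, viewed as a self-adjoint operator on $\mathcal{H}_1\ominus Ker(A)$; then $\gamma_e(A)$ is the supremum of all $\gamma\geqslant 0$ for which there exists a compact self-adjoint operator $K$ on $\mathcal{H}_1\ominus Ker(A)$ with $B+K\geqslant\gamma^2 I$ (so $\gamma_e(A)=+\infty$ if $\mathcal{H}_1\ominus Ker(A)$ is finite dimensional); for the zero operator, $\gamma_e(0)=+\infty$. Subspaces $\mathcal{X}_1,\ldots,\mathcal{X}_n$ of a Hilbert space $\mathcal{X}$ are called essentially linearly independent if the linear set $\mathcal{X}_i\cap\sum_{j\neq i}\mathcal{X}_j$ is finite dimensional for every $i=1,\ldots,n$. *)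

theory Defs
  imports "HOL-Analysis.Analysis"
begin

class scaleC = scaleR +
  fixes scaleC :: "complex \<Rightarrow> 'a \<Rightarrow> 'a" (infixr "*\<^sub>C" 75)
  assumes scaleR_scaleC: "scaleR r = scaleC (complex_of_real r)"

class complex_vector = scaleC + ab_group_add +
  assumes scaleC_add_right: "a *\<^sub>C (x + y) = a *\<^sub>C x + a *\<^sub>C y"
    and scaleC_add_left: "(a + b) *\<^sub>C x = a *\<^sub>C x + b *\<^sub>C x"
    and scaleC_scaleC: "a *\<^sub>C (b *\<^sub>C x) = (a * b) *\<^sub>C x"
    and scaleC_one: "1 *\<^sub>C x = x"

class complex_normed_vector = complex_vector + real_normed_vector +
  assumes norm_scaleC: "norm (a *\<^sub>C x) = cmod a * norm x"

class complex_inner = complex_normed_vector +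
  fixes cinner :: "'a \<Rightarrow> 'a \<Rightarrow> complex"
  assumes cinner_commute: "cinner x y = cnj (cinner y x)"
    and cinner_add_left: "cinner (x + y) z = cinner x z + cinner y z"
    and cinner_scaleC_left: "cinner (r *\<^sub>C x) y = cnj r * cinner x y"
    and cinner_real: "Im (cinner x x) = 0"
    and cinner_ge_zero: "0 \<le> Re (cinner x x)"
    and cinner_eq_zero_iff: "cinner x x = 0 \<longleftrightarrow> x = 0"
    and norm_eq_sqrt_cinner: "norm x = sqrt (Re (cinner x x))"

class chilbert_space = complex_inner + complete_space

definition csubspace :: "'a::complex_vector set \<Rightarrow> bool" where
  "csubspace S \<longleftrightarrow> 0 \<in> S \<and> (\<forall>x\<in>S. \<forall>y\<in>S. x + y \<in> S) \<and> (\<forall>c. \<forall>x\<in>S. c *\<^sub>C x \<in> S)"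

definition closed_csubspace :: "'a::complex_normed_vector set \<Rightarrow> bool" where
  "closed_csubspace S \<longleftrightarrow> csubspace S \<and> closed S"

definition cspan_fin :: "'a::complex_vector set \<Rightarrow> 'a set" where
  "cspan_fin F = {(\<Sum>v\<in>F. c v *\<^sub>C v) | c. True}"

definition finite_dim :: "'a::complex_vector set \<Rightarrow> bool" where
  "finite_dim S \<longleftrightarrow> (\<exists>F. finite F \<and> S \<subseteq> cspan_fin F)"

definition bounded_clinear_on :: "'a::complex_normed_vector set \<Rightarrow> 'b::complex_normed_vector set \<Rightarrow> ('a \<Rightarrow> 'b) \<Rightarrow> bool" where
  "bounded_clinear_on X Y T \<longleftrightarrow>
     T ` X \<subseteq> Y \<and>
     (\<forall>x\<in>X. \<forall>y\<in>X. T (x + y) = T x + T y) \<and>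
     (\<forall>c. \<forall>x\<in>X. T (c *\<^sub>C x) = c *\<^sub>C T x) \<and>
     (\<exists>K. \<forall>x\<in>X. norm (T x) \<le> norm x * K)"

definition op_norm_on :: "'a::complex_normed_vector set \<Rightarrow> ('a \<Rightarrow> 'b::complex_normed_vector) \<Rightarrow> real" where
  "op_norm_on X T = Sup {norm (T x) | x. x \<in> X \<and> norm x \<le> 1}"

definition compact_op_on :: "'a::complex_normed_vector set \<Rightarrow> 'b::complex_normed_vector set \<Rightarrow> ('a \<Rightarrow> 'b) \<Rightarrow> bool" where
  "compact_op_on X Y K \<longleftrightarrow> bounded_clinear_on X Y K \<and> compact (closure (K ` (X \<inter> cball 0 1)))"

definition ess_norm :: "'a::complex_normed_vector set \<Rightarrow> 'b::complex_normed_vector set \<Rightarrow> ('a \<Rightarrow> 'b) \<Rightarrow> real" where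
  "ess_norm X Y T = Inf {op_norm_on X (\<lambda>x. T x + K x) | K. compact_op_on X Y K}"

definition adj_on :: "'a::complex_inner set \<Rightarrow> ('a \<Rightarrow> 'b::complex_inner) \<Rightarrow> 'b \<Rightarrow> 'a" where
  "adj_on X A y = (THE z. z \<in> X \<and> (\<forall>x\<in>X. cinner (A x) y = cinner x z))"

definition ker_on :: "'a set \<Rightarrow> ('a \<Rightarrow> 'b::zero) \<Rightarrow> 'a set" where
  "ker_on X A = {x\<in>X. A x = 0}"

definition orth_diff :: "'a::complex_inner set \<Rightarrow> 'a set \<Rightarrow> 'a set" where
  "orth_diff X S = {x\<in>X. \<forall>s\<in>S. cinner s x = 0}"

definition selfadjoint_on :: "'a::complex_inner set \<Rightarrow> ('a \<Rightarrow> 'a) \<Rightarrow> bool" where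
  "selfadjoint_on D K \<longleftrightarrow> (\<forall>x\<in>D. \<forall>y\<in>D. cinner (K x) y = cinner x (K y))"

text \<open>Essential reduced minimum modulus of \<open>A : X \<rightarrow> Y\<close>.
  \<open>B = A\<^sup>*A\<close> restricted to \<open>D = X \<ominus> Ker A\<close>; \<open>B + K \<ge> \<gamma>\<^sup>2 I\<close> means
  \<open>\<langle>(B+K)x, x\<rangle> \<ge> \<gamma>\<^sup>2 \<langle>x,x\<rangle>\<close> for all \<open>x \<in> D\<close>.\<close>
definition ess_red_min_mod :: "'a::complex_inner set \<Rightarrow> ('a \<Rightarrow> 'b::complex_inner) \<Rightarrow> ereal" where
  "ess_red_min_mod X A =
    (if (\<forall>x\<in>X. A x = 0) then \<infinity>
     else (let D = orth_diff X (ker_on X A);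
               B = (\<lambda>x. adj_on X A (A x))
           in Sup {ereal g | g. g \<ge> 0 \<and>
                  (\<exists>K. compact_op_on D D K \<and> selfadjoint_on D K \<and>
                       (\<forall>x\<in>D. Re (cinner (B x + K x) x) \<ge> g\<^sup>2 * (norm x)\<^sup>2))}))"

definition pos_def_mat :: "nat \<Rightarrow> (nat \<Rightarrow> nat \<Rightarrow> real) \<Rightarrow> bool" where
  "pos_def_mat n M \<longleftrightarrow>
     (\<forall>i\<in>{1..n}. \<forall>j\<in>{1..n}. M i j = M j i) \<and>
     (\<forall>v. (\<exists>i\<in>{1..n}. v i \<noteq> 0) \<longrightarrow> (\<Sum>i\<in>{1..n}. \<Sum>j\<in>{1..n}. v i * M i j * v j) > 0)"

definition ess_lin_indep :: "nat \<Rightarrow> (nat \<Rightarrow> 'a::complex_vector set) \<Rightarrow> bool" where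
  "ess_lin_indep n R \<longleftrightarrow>
     (\<forall>i\<in>{1..n}. finite_dim (R i \<inter> {(\<Sum>j\<in>{1..n}-{i}. y j) | y. \<forall>j\<in>{1..n}-{i}. y j \<in> R j}))"

end

theory Submission
  imports Defs
begin
lemma cinner_add_right: "cinner x (y + z) = cinner x y + cinner x z"
  by (metis cinner_add_left cinner_commute complex_cnj_add)

lemma cinner_scaleC_right: "cinner x (r *\<^sub>C y) = r * cinner x y"
  by (metis cinner_commute cinner_scaleC_left complex_cnj_cnj complex_cnj_mult)

lemma cinner_zero_left[simp]: "cinner 0 y = 0"
  using cinner_add_left[of 0 0 y] by simp

lemma cinner_zero_right[simp]: "cinner x 0 = 0"
  using cinner_add_right[of x 0 0] by simp

lemma cinner_minus_left: "cinner (- x) y = - cinner x y"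
  using cinner_add_left[of x "-x" y] by (simp add: eq_neg_iff_add_eq_0 add.commute)

lemma cinner_minus_right: "cinner x (- y) = - cinner x y"
  using cinner_add_right[of x y "-y"] by (simp add: eq_neg_iff_add_eq_0 add.commute)

lemma cinner_diff_left: "cinner (x - y) z = cinner x z - cinner y z"
  using cinner_add_left[of x "-y" z] cinner_minus_left[of y z] by simp

lemma cinner_diff_right: "cinner x (y - z) = cinner x y - cinner x z"
  using cinner_add_right[of x y "-z"] cinner_minus_right[of x z] by simp

lemma cinner_sum_left: "cinner (\<Sum>i\<in>A. f i) y = (\<Sum>i\<in>A. cinner (f i) y)"
  by (induction A rule: infinite_finite_induct) (auto simp: cinner_add_left)

lemma cinner_sum_right: "cinner x (\<Sum>i\<in>A. f i) = (\<Sum>i\<in>A. cinner x (f i))"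
  by (induction A rule: infinite_finite_induct) (auto simp: cinner_add_right)

lemma scaleR_as_C: "r *\<^sub>R x = complex_of_real r *\<^sub>C x"
  by (simp add: scaleR_scaleC)

lemma cinner_scaleR_left: "cinner (r *\<^sub>R x) y = complex_of_real r * cinner x y"
  by (simp add: scaleR_as_C cinner_scaleC_left)

lemma cinner_scaleR_right: "cinner x (r *\<^sub>R y) = complex_of_real r * cinner x y"
  by (simp add: scaleR_as_C cinner_scaleC_right)

lemma norm_sq_Re: "(norm x)\<^sup>2 = Re (cinner x x)"
  by (simp add: norm_eq_sqrt_cinner cinner_ge_zero)

lemma cinner_self: "cinner x x = complex_of_real ((norm x)\<^sup>2)"
  by (simp add: norm_sq_Re complex_eq_iff cinner_real)

lemma Re_cinner_commute: "Re (cinner x y) = Re (cinner y x)"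
  by (subst cinner_commute) simp

lemma norm_add_sq: "(norm (x + y))\<^sup>2 = (norm x)\<^sup>2 + (norm y)\<^sup>2 + 2 * Re (cinner x y)"
  unfolding norm_sq_Re by (simp add: cinner_add_left cinner_add_right Re_cinner_commute[of y x])

lemma norm_diff_sq: "(norm (x - y))\<^sup>2 = (norm x)\<^sup>2 + (norm y)\<^sup>2 - 2 * Re (cinner x y)"
  unfolding norm_sq_Re by (simp add: cinner_diff_left cinner_diff_right Re_cinner_commute[of y x])

lemma cauchy_schwarz: "cmod (cinner x y) \<le> norm x * norm y"
proof (cases "y = 0")
  case True then show ?thesis by simp
next
  case False
  define c where "c = cinner y x"
  define s where "s = (norm y)\<^sup>2"
  have s0: "s > 0" using False by (simp add: s_def)
  define z where "z = x - (c / s) *\<^sub>C y"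
  have yz: "cinner y z = 0"
    using s0 by (simp add: z_def cinner_diff_right cinner_scaleC_right cinner_self c_def s_def)
  have zy: "cinner z y = 0" using yz by (metis cinner_commute complex_cnj_zero)
  have "x = z + (c / s) *\<^sub>C y" by (simp add: z_def)
  hence "cinner x x = cinner z z + cnj (c/s) * (c/s) * cinner y y"
    by (simp add: cinner_add_left cinner_add_right cinner_scaleC_left cinner_scaleC_right yz zy algebra_simps)
  moreover have "cnj (c/s) * (c/s) * cinner y y = complex_of_real ((cmod c)\<^sup>2 / s)"
  proof -
    have "cnj (c/s) * (c/s) = complex_of_real ((cmod c)\<^sup>2) / (complex_of_real s)^2"
    proof -
      have h: "cnj c * c = complex_of_real (cmod c) * complex_of_real (cmod c)"
        by (metis complex_norm_square mult.commute of_real_power power2_eq_square)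
      have h2: "complex_of_real (norm y) * complex_of_real (norm y) = complex_of_real s"
        by (simp add: s_def power2_eq_square)
      show ?thesis using s0 by (simp add: h h2 power2_eq_square)
    qed
    moreover have "cinner y y = complex_of_real s" by (simp add: cinner_self s_def)
    ultimately show ?thesis using s0 by (simp add: power2_eq_square)
  qed
  ultimately have "complex_of_real ((norm x)\<^sup>2) = complex_of_real ((norm z)\<^sup>2 + (cmod c)\<^sup>2 / s)"
    by (simp add: cinner_self)
  hence "(norm x)\<^sup>2 = (norm z)\<^sup>2 + (cmod c)\<^sup>2 / s" using of_real_eq_iff by blast
  hence "(cmod c)\<^sup>2 \<le> (norm x)\<^sup>2 * s" using s0 by (simp add: field_simps)
  hence "(cmod c)\<^sup>2 \<le> (norm x * norm y)\<^sup>2" by (simp add: s_def power_mult_distrib)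
  hence "cmod c \<le> norm x * norm y" by (meson norm_ge_zero power2_le_imp_le zero_le_mult_iff)
  moreover have "cmod c = cmod (cinner x y)" by (metis c_def cinner_commute complex_mod_cnj)
  ultimately show ?thesis by simp
qed

section \<open>Subspaces and linear maps\<close>

lemma csub_0: "csubspace S \<Longrightarrow> 0 \<in> S" by (simp add: csubspace_def)
lemma csub_add: "csubspace S \<Longrightarrow> x \<in> S \<Longrightarrow> y \<in> S \<Longrightarrow> x + y \<in> S" by (simp add: csubspace_def)
lemma csub_scaleC: "csubspace S \<Longrightarrow> x \<in> S \<Longrightarrow> c *\<^sub>C x \<in> S" by (simp add: csubspace_def)

lemma scaleC_zero_left: "(0::complex) *\<^sub>C (x::'a::complex_vector) = 0"
proof -
  have "(0::complex) *\<^sub>C x = (0 + 0::complex) *\<^sub>C x" by simp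
  hence "(0::complex) *\<^sub>C x = (0::complex) *\<^sub>C x + (0::complex) *\<^sub>C x"
    by (simp only: scaleC_add_left)
  thus ?thesis by simp
qed

lemma scaleC_minus1: "(-1::complex) *\<^sub>C (x::'a::complex_vector) = - x"
proof -
  note z = scaleC_zero_left[of x]
  have "x + (-1::complex) *\<^sub>C x = (1 + (-1::complex)) *\<^sub>C x"
    by (simp only: scaleC_add_left scaleC_one)
  also have "\<dots> = 0" using z by simp
  finally show ?thesis by (simp add: eq_neg_iff_add_eq_0 add.commute)
qed

lemma csub_minus: "csubspace S \<Longrightarrow> x \<in> S \<Longrightarrow> - x \<in> S"
  using csub_scaleC[of S x "-1"] by (simp add: scaleC_minus1)
lemma csub_diff: "csubspace S \<Longrightarrow> x \<in> S \<Longrightarrow> y \<in> S \<Longrightarrow> x - y \<in> S"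
  using csub_add[of S x "-y"] csub_minus[of S y] by simp
lemma csub_scaleR: "csubspace S \<Longrightarrow> x \<in> S \<Longrightarrow> r *\<^sub>R x \<in> S"
  by (simp add: csub_scaleC scaleR_as_C)
lemma csub_sum: "csubspace S \<Longrightarrow> (\<And>i. i \<in> I \<Longrightarrow> f i \<in> S) \<Longrightarrow> (\<Sum>i\<in>I. f i) \<in> S"
  by (induction I rule: infinite_finite_induct) (auto simp: csub_0 csub_add)

lemma ccsub: "closed_csubspace S \<Longrightarrow> csubspace S" by (simp add: closed_csubspace_def)
lemma ccsub_closed: "closed_csubspace S \<Longrightarrow> closed S" by (simp add: closed_csubspace_def)

lemma blin_add: "bounded_clinear_on X Y T \<Longrightarrow> x \<in> X \<Longrightarrow> y \<in> X \<Longrightarrow> T (x + y) = T x + T y"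
  by (simp add: bounded_clinear_on_def)
lemma blin_scaleC: "bounded_clinear_on X Y T \<Longrightarrow> x \<in> X \<Longrightarrow> T (c *\<^sub>C x) = c *\<^sub>C T x"
  by (simp add: bounded_clinear_on_def)
lemma blin_into: "bounded_clinear_on X Y T \<Longrightarrow> x \<in> X \<Longrightarrow> T x \<in> Y"
  by (auto simp: bounded_clinear_on_def)
lemma blin_scaleR: "bounded_clinear_on X Y T \<Longrightarrow> x \<in> X \<Longrightarrow> T (r *\<^sub>R x) = r *\<^sub>R T x"
  by (simp add: scaleR_as_C blin_scaleC)
lemma blin_0: "bounded_clinear_on X Y T \<Longrightarrow> csubspace X \<Longrightarrow> T 0 = 0"
proof -
  assume a: "bounded_clinear_on X Y T" "csubspace X"
  have "T ((0::complex) *\<^sub>C 0) = (0::complex) *\<^sub>C T 0" using blin_scaleC[OF a(1) csub_0[OF a(2)]] .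
  thus ?thesis by (simp only: scaleC_zero_left)
qed
lemma blin_minus: "bounded_clinear_on X Y T \<Longrightarrow> x \<in> X \<Longrightarrow> T (- x) = - T x"
  using blin_scaleC[of X Y T x "-1"] by (simp add: scaleC_minus1)
lemma blin_diff: "bounded_clinear_on X Y T \<Longrightarrow> csubspace X \<Longrightarrow> x \<in> X \<Longrightarrow> y \<in> X \<Longrightarrow> T (x - y) = T x - T y"
  using blin_add[of X Y T x "-y"] blin_minus[of X Y T y] csub_minus[of X y] by simp
lemma blin_sum: "bounded_clinear_on X Y T \<Longrightarrow> csubspace X \<Longrightarrow> (\<And>i. i \<in> I \<Longrightarrow> f i \<in> X) \<Longrightarrow>
   T (\<Sum>i\<in>I. f i) = (\<Sum>i\<in>I. T (f i))"
proof (induction I rule: infinite_finite_induct)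
  case (infinite A) then show ?case using blin_0 by auto
next
  case empty then show ?case using blin_0 by auto
next
  case (insert x F)
  then show ?case by (simp add: blin_add csub_sum)
qed
lemma blin_bound: "bounded_clinear_on X Y T \<Longrightarrow> \<exists>K\<ge>0. \<forall>x\<in>X. norm (T x) \<le> norm x * K"
proof -
  assume "bounded_clinear_on X Y T"
  then obtain K where K: "\<forall>x\<in>X. norm (T x) \<le> norm x * K" by (auto simp: bounded_clinear_on_def)
  have "\<forall>x\<in>X. norm (T x) \<le> norm x * max K 0"
  proof
    fix x assume "x \<in> X"
    hence "norm (T x) \<le> norm x * K" using K by blast
    also have "\<dots> \<le> norm x * max K 0" by (intro mult_left_mono) auto
    finally show "norm (T x) \<le> norm x * max K 0" .
  qed
  thus ?thesis by (intro exI[of _ "max K 0"]) auto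
qed

lemma blin_cont: assumes "bounded_clinear_on X Y T" "csubspace X" "\<forall>m. s m \<in> X" "x \<in> X" "s \<longlonglongrightarrow> x"
  shows "(\<lambda>m. T (s m)) \<longlonglongrightarrow> T x"
proof -
  obtain K where K: "K \<ge> 0" "\<forall>x\<in>X. norm (T x) \<le> norm x * K" using blin_bound[OF assms(1)] by blast
  have t1: "(\<lambda>m. norm (s m - x)) \<longlonglongrightarrow> 0" using tendsto_norm_zero[OF LIM_zero[OF assms(5)]] .
  have "(\<lambda>m. norm (s m - x) * K) \<longlonglongrightarrow> 0" using tendsto_mult_left_zero[OF t1] .
  moreover have "\<forall>m. norm (T (s m) - T x) \<le> norm (s m - x) * K"
  proof
    fix m
    have "T (s m) - T x = T (s m - x)" using blin_diff[OF assms(1,2)] assms(3,4) by simp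
    moreover have "s m - x \<in> X" using csub_diff[OF assms(2)] assms(3,4) by simp
    ultimately show "norm (T (s m) - T x) \<le> norm (s m - x) * K" using K(2) by simp
  qed
  ultimately have "(\<lambda>m. T (s m) - T x) \<longlonglongrightarrow> 0"
    using Lim_null_comparison[of "\<lambda>m. T (s m) - T x" "\<lambda>m. norm (s m - x) * K" sequentially]
    by (simp add: always_eventually)
  thus ?thesis by (simp add: LIM_zero_iff)
qed

lemma parallelogram: fixes a b :: "'a::complex_inner" shows "(norm (a - b))\<^sup>2 + (norm (a + b))\<^sup>2 = 2 * (norm a)\<^sup>2 + 2 * (norm b)\<^sup>2"
  by (simp add: norm_add_sq norm_diff_sq)

lemma cauchy_bound_aux:
  fixes d \<epsilon> e1 e2 :: real
  assumes "d \<ge> 0" "\<epsilon> > 0" "0 \<le> e1" "0 \<le> e2" "e1 < min 1 (\<epsilon>\<^sup>2 / (8*d+8))" "e2 < min 1 (\<epsilon>\<^sup>2 / (8*d+8))"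
  shows "2*(d+e1)\<^sup>2 + 2*(d+e2)\<^sup>2 - 4*d\<^sup>2 < \<epsilon>\<^sup>2"
proof -
  define \<eta> where "\<eta> = min 1 (\<epsilon>\<^sup>2 / (8*d+8))"
  have h1: "\<eta> \<le> 1" by (simp add: \<eta>_def)
  have h2: "\<eta> * (8*d+8) \<le> \<epsilon>\<^sup>2"
  proof -
    have p: "8*d+8 > 0" using assms(1) by simp
    have "\<eta> * (8*d+8) \<le> (\<epsilon>\<^sup>2 / (8*d+8)) * (8*d+8)"
      using p by (intro mult_right_mono) (auto simp: \<eta>_def)
    thus ?thesis using p by simp
  qed
  have e1: "e1 < \<eta>" "e2 < \<eta>" using assms by (auto simp: \<eta>_def)
  have "2*(d+e1)\<^sup>2 + 2*(d+e2)\<^sup>2 - 4*d\<^sup>2 = 4*d*(e1+e2) + 2*e1*e1 + 2*e2*e2"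
    by (simp add: power2_eq_square algebra_simps)
  also have "\<dots> \<le> 4*d*(2*\<eta>) + 2*\<eta> + 2*\<eta>"
  proof -
    have "4*d*(e1+e2) \<le> 4*d*(2*\<eta>)" using e1 assms(1) by (intro mult_left_mono) auto
    moreover have "e1*e1 \<le> e1 * 1" using e1 h1 assms(3) by (intro mult_left_mono) auto
    moreover have "e2*e2 \<le> e2 * 1" using e1 h1 assms(4) by (intro mult_left_mono) auto
    ultimately show ?thesis using e1 by linarith
  qed
  also have "\<dots> < \<eta> * (8*d+8)"
  proof -
    have "\<eta> > 0" using e1 assms(3) by linarith
    thus ?thesis using assms(1) by (simp add: algebra_simps)
  qed
  also have "\<dots> \<le> \<epsilon>\<^sup>2" by (rule h2)
  finally show ?thesis .
qed

lemma proj_exists: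
  fixes u :: "'a::chilbert_space"
  assumes Z: "closed_csubspace Z"
  shows "\<exists>p\<in>Z. \<forall>s\<in>Z. cinner s (u - p) = 0"
proof -
  have Zs: "csubspace Z" using ccsub[OF Z] .
  define D where "D = {norm (u - z) | z. z \<in> Z}"
  define d where "d = Inf D"
  have Dne: "D \<noteq> {}" using csub_0[OF Zs] by (auto simp: D_def)
  have Dbd: "bdd_below D" unfolding D_def by (rule bdd_belowI[of _ 0]) auto
  have dle: "\<forall>z\<in>Z. d \<le> norm (u - z)"
    unfolding d_def using Dbd by (auto intro!: cInf_lower simp: D_def)
  have d0: "d \<ge> 0" unfolding d_def using Dne by (intro cInf_greatest) (auto simp: D_def)
  have "\<forall>m. \<exists>z. z \<in> Z \<and> norm (u - z) < d + 1/real (Suc m)"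
  proof
    fix m
    have "Inf D < d + 1/real (Suc m)" by (simp add: d_def)
    then obtain t where "t \<in> D" "t < d + 1/real (Suc m)" using cInf_lessD[OF Dne] by blast
    thus "\<exists>z. z \<in> Z \<and> norm (u - z) < d + 1/real (Suc m)" by (auto simp: D_def)
  qed
  then obtain zs where zs: "\<And>m. zs m \<in> Z" "\<And>m. norm (u - zs m) < d + 1/real (Suc m)"
    by (metis (mono_tags))
  define e where "e m = 1/real (Suc m)" for m
  have e0: "e m \<ge> 0" for m by (simp add: e_def)
  have key: "(norm (zs m - zs p))\<^sup>2 \<le> 2*(d + e m)\<^sup>2 + 2*(d + e p)\<^sup>2 - 4*d\<^sup>2" for m p
  proof -
    define a where "a = u - zs m"
    define b where "b = u - zs p"
    define mid where "mid = (1/2::real) *\<^sub>R (zs m + zs p)"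
    have mid: "mid \<in> Z" unfolding mid_def by (intro csub_scaleR[OF Zs] csub_add[OF Zs] zs)
    have ab: "a + b = 2 *\<^sub>R (u - mid)" by (simp add: a_def b_def mid_def algebra_simps scaleR_right_distrib scaleR_2)
    have "norm (a + b) = 2 * norm (u - mid)" by (simp add: ab)
    hence "norm (a + b) \<ge> 2 * d" using dle mid by simp
    hence "(2 * d)\<^sup>2 \<le> (norm (a + b))\<^sup>2" using d0 by (intro power_mono) auto
    hence s1: "(norm (a + b))\<^sup>2 \<ge> 4 * d\<^sup>2" by (simp add: power_mult_distrib)
    have s2: "(norm a)\<^sup>2 \<le> (d + e m)\<^sup>2" unfolding a_def e_def
      using zs(2)[of m] by (intro power_mono) auto
    have s3: "(norm b)\<^sup>2 \<le> (d + e p)\<^sup>2" unfolding b_def e_def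
      using zs(2)[of p] by (intro power_mono) auto
    have "a - b = zs p - zs m" by (simp add: a_def b_def)
    hence "(norm (zs m - zs p))\<^sup>2 = (norm (a - b))\<^sup>2" by (simp add: norm_minus_commute)
    thus ?thesis using parallelogram[of a b] s1 s2 s3 by linarith
  qed
  have "Cauchy zs"
  proof (rule metric_CauchyI)
    fix \<epsilon> :: real assume \<epsilon>: "\<epsilon> > 0"
    define \<eta> where "\<eta> = min 1 (\<epsilon>\<^sup>2 / (8*d+8))"
    have "\<eta> > 0" using \<epsilon> d0 by (simp add: \<eta>_def)
    then obtain N where N: "inverse (real (Suc N)) < \<eta>" using reals_Archimedean by blast
    show "\<exists>M. \<forall>m\<ge>M. \<forall>n\<ge>M. dist (zs m) (zs n) < \<epsilon>"
    proof (intro exI allI impI)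
      fix m p assume mp: "N \<le> m" "N \<le> p"
      have em0: "e q \<le> inverse (real (Suc N))" if "N \<le> q" for q
        unfolding e_def using that by (simp add: divide_inverse le_imp_inverse_le)
      have em: "e m < \<eta>" "e p < \<eta>"
        using em0[OF mp(1)] em0[OF mp(2)] N by linarith+
      have "(norm (zs m - zs p))\<^sup>2 < \<epsilon>\<^sup>2"
        using key[of m p] cauchy_bound_aux[OF d0 \<epsilon> e0 e0 em[unfolded \<eta>_def]] by linarith
      hence "norm (zs m - zs p) < \<epsilon>" using \<epsilon> by (meson power_less_imp_less_base less_le)
      thus "dist (zs m) (zs p) < \<epsilon>" by (simp add: dist_norm)
    qed
  qed
  then obtain p where p: "zs \<longlonglongrightarrow> p" using Cauchy_convergent_iff convergent_def by blast
  have pZ: "p \<in> Z" using ccsub_closed[OF Z] closed_sequential_limits zs(1) p by blast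
  have pmin: "norm (u - p) \<le> d"
  proof (rule tendsto_le[OF trivial_limit_sequentially])
    show "(\<lambda>m. d + e m) \<longlonglongrightarrow> d"
      using tendsto_add[OF tendsto_const LIMSEQ_inverse_real_of_nat] by (simp add: e_def inverse_eq_divide)
    show "(\<lambda>m. norm (u - zs m)) \<longlonglongrightarrow> norm (u - p)" by (intro tendsto_intros p)
    show "\<forall>\<^sub>F m in sequentially. norm (u - zs m) \<le> d + e m"
      using zs(2) by (simp add: e_def less_imp_le)
  qed
  have "\<forall>s\<in>Z. cinner s (u - p) = 0"
  proof (rule ccontr)
    assume "\<not> ?thesis"
    then obtain s where s: "s \<in> Z" "cinner s (u - p) \<noteq> 0" by blast
    define w where "w = u - p"
    define c where "c = cinner s w"
    have c0: "cmod c > 0" using s by (simp add: c_def w_def)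
    define r where "r = 1 / ((norm s)\<^sup>2 + 1)"
    have rp: "(norm s)\<^sup>2 + 1 > 0" using add_nonneg_pos[OF zero_le_power2[of "norm s"] zero_less_one] .
    have r0: "r > 0" using rp by (simp add: r_def)
    define t where "t = complex_of_real r * c"
    have "p + t *\<^sub>C s \<in> Z" by (intro csub_add[OF Zs] pZ csub_scaleC[OF Zs] s(1))
    hence "d \<le> norm (u - (p + t *\<^sub>C s))" using dle by blast
    hence "norm w \<le> norm (w - t *\<^sub>C s)" using pmin by (simp add: w_def algebra_simps)
    hence "(norm w)\<^sup>2 \<le> (norm (w - t *\<^sub>C s))\<^sup>2" by (simp add: power_mono)
    moreover have "(norm (w - t *\<^sub>C s))\<^sup>2 = (norm w)\<^sup>2 + (r * cmod c)\<^sup>2 * (norm s)\<^sup>2 - 2 * r * (cmod c)\<^sup>2"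
    proof -
      have "cinner w (t *\<^sub>C s) = t * cnj c"
        by (simp add: cinner_scaleC_right c_def) (metis cinner_commute)
      also have "\<dots> = complex_of_real (r * (cmod c)\<^sup>2)"
        using complex_norm_square[of c] by (simp add: t_def mult.assoc)
      finally have "Re (cinner w (t *\<^sub>C s)) = r * (cmod c)\<^sup>2" by simp
      moreover have "norm (t *\<^sub>C s) = r * cmod c * norm s"
        using r0 by (simp add: norm_scaleC t_def norm_mult)
      ultimately show ?thesis by (simp add: norm_diff_sq power_mult_distrib)
    qed
    ultimately have "0 \<le> (r * cmod c)\<^sup>2 * (norm s)\<^sup>2 - 2 * r * (cmod c)\<^sup>2" by linarith
    hence "0 \<le> r * (cmod c)\<^sup>2 * (r * (norm s)\<^sup>2 - 2)" by (simp add: power2_eq_square algebra_simps)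
    moreover have "r * (norm s)\<^sup>2 < 1" using rp by (simp add: r_def)
    moreover have "r * (cmod c)\<^sup>2 > 0" using r0 c0 by simp
    ultimately show False
      using mult_pos_neg[of "r * (cmod c)\<^sup>2" "r * (norm s)\<^sup>2 - 2"] by linarith
  qed
  thus ?thesis using pZ by blast
qed

lemma bound_tendsto0:
  fixes g :: "nat \<Rightarrow> 'b::real_normed_vector" and s :: "nat \<Rightarrow> 'c::real_normed_vector"
  assumes "\<And>m. norm (g m) \<le> C * norm (s m - x)" "s \<longlonglongrightarrow> x"
  shows "g \<longlonglongrightarrow> 0"
proof -
  have t1: "(\<lambda>m. norm (s m - x)) \<longlonglongrightarrow> 0" using tendsto_norm_zero[OF LIM_zero[OF assms(2)]] .
  have t2: "(\<lambda>m. C * norm (s m - x)) \<longlonglongrightarrow> 0" using tendsto_mult_right_zero[OF t1] .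
  show ?thesis
    using Lim_null_comparison[of g "\<lambda>m. C * norm (s m - x)" sequentially] assms(1) t2
    by (simp add: always_eventually)
qed

lemma cinner_tendsto_right:
  assumes "s \<longlonglongrightarrow> x" shows "(\<lambda>m. cinner a (s m)) \<longlonglongrightarrow> cinner a x"
proof -
  have "(\<lambda>m. cinner a (s m) - cinner a x) \<longlonglongrightarrow> 0"
  proof (rule bound_tendsto0[OF _ assms])
    fix m
    have "cinner a (s m) - cinner a x = cinner a (s m - x)" by (simp add: cinner_diff_right)
    thus "norm (cinner a (s m) - cinner a x) \<le> norm a * norm (s m - x)" using cauchy_schwarz by simp
  qed
  thus ?thesis by (simp add: LIM_zero_iff)
qed

lemma riesz:
  fixes f :: "'a::chilbert_space \<Rightarrow> complex"
  assumes X: "closed_csubspace X"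
    and fadd: "\<forall>x\<in>X. \<forall>y\<in>X. f (x + y) = f x + f y"
    and fscale: "\<forall>c. \<forall>x\<in>X. f (c *\<^sub>C x) = c * f x"
    and fbd: "\<forall>x\<in>X. cmod (f x) \<le> C * norm x"
  shows "\<exists>z\<in>X. \<forall>x\<in>X. cinner z x = f x"
proof -
  have Xs: "csubspace X" using ccsub[OF X] .
  have f0: "f 0 = 0"
  proof -
    have "f ((0::complex) *\<^sub>C 0) = 0 * f 0" using fscale csub_0[OF Xs] by blast
    thus ?thesis by (simp add: scaleC_zero_left)
  qed
  have fminus: "f (- x) = - f x" if "x \<in> X" for x
  proof -
    have "f ((-1::complex) *\<^sub>C x) = (-1) * f x" using fscale that by blast
    thus ?thesis by (simp add: scaleC_minus1)
  qed
  have fdiff: "f (x - y) = f x - f y" if "x \<in> X" "y \<in> X" for x y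
  proof -
    have "f (x + - y) = f x + f (- y)" using fadd that csub_minus[OF Xs] by blast
    thus ?thesis using fminus[OF that(2)] by simp
  qed
  define Z where "Z = {x\<in>X. f x = 0}"
  have Zs: "csubspace Z" unfolding csubspace_def Z_def
    using csub_0[OF Xs] csub_add[OF Xs] csub_scaleC[OF Xs] f0 fadd fscale by auto
  have Zc: "closed Z"
    unfolding closed_sequential_limits
  proof (intro allI impI, elim conjE)
    fix xs l assume xs: "\<forall>m. xs m \<in> Z" and l: "xs \<longlonglongrightarrow> l"
    have lX: "l \<in> X" using ccsub_closed[OF X] closed_sequential_limits xs l by (auto simp: Z_def)
    have "(\<lambda>m. f l) \<longlonglongrightarrow> 0"
    proof (rule bound_tendsto0[of _ C xs l, OF _ l])
      fix m
      have "xs m \<in> X" "f (xs m) = 0" using xs by (auto simp: Z_def)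
      hence "f l = f (xs m - l) * (-1)" using fdiff lX by simp
      hence "cmod (f l) = cmod (f (xs m - l))" by (simp add: norm_mult)
      also have "\<dots> \<le> C * norm (xs m - l)" using fbd csub_diff[OF Xs \<open>xs m \<in> X\<close> lX] by blast
      finally show "norm (f l) \<le> C * norm (xs m - l)" by simp
    qed
    hence "f l = 0" using LIMSEQ_const_iff by blast
    thus "l \<in> Z" using lX by (simp add: Z_def)
  qed
  have Zcc: "closed_csubspace Z" using Zs Zc by (simp add: closed_csubspace_def)
  show ?thesis
  proof (cases "\<forall>x\<in>X. f x = 0")
    case True
    then show ?thesis using csub_0[OF Xs] by (intro bexI[of _ 0]) auto
  next
    case False
    then obtain w where w: "w \<in> X" "f w \<noteq> 0" by blast
    obtain p where p: "p \<in> Z" "\<forall>s\<in>Z. cinner s (w - p) = 0" using proj_exists[OF Zcc] by blast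
    define w0 where "w0 = w - p"
    have pX: "p \<in> X" "f p = 0" using p by (auto simp: Z_def)
    have w0X: "w0 \<in> X" using csub_diff[OF Xs w(1) pX(1)] by (simp add: w0_def)
    have fw0: "f w0 = f w" using fdiff[OF w(1) pX(1)] pX by (simp add: w0_def)
    have w0nz: "w0 \<noteq> 0" using fw0 w f0 by auto
    define s where "s = (norm w0)\<^sup>2"
    have s0: "s > 0" using w0nz by (simp add: s_def)
    define z where "z = (cnj (f w0) / complex_of_real s) *\<^sub>C w0"
    have zX: "z \<in> X" using csub_scaleC[OF Xs w0X] by (simp add: z_def)
    have "cinner z x = f x" if xX: "x \<in> X" for x
    proof -
      define \<alpha> where "\<alpha> = f x / f w0"
      define v where "v = x - \<alpha> *\<^sub>C w0"
      have vX: "v \<in> X" unfolding v_def by (intro csub_diff[OF Xs xX] csub_scaleC[OF Xs w0X])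
      have "f v = f x - \<alpha> * f w0" unfolding v_def
        using fdiff[OF xX csub_scaleC[OF Xs w0X]] fscale w0X by simp
      hence "f v = 0" using fw0 w by (simp add: \<alpha>_def)
      hence "v \<in> Z" using vX by (simp add: Z_def)
      hence "cinner v w0 = 0" using p(2) by (simp add: w0_def)
      hence e1: "cinner x w0 = cnj \<alpha> * complex_of_real s"
        by (simp add: v_def cinner_diff_left cinner_scaleC_left cinner_self s_def)
      have "cinner w0 x = \<alpha> * complex_of_real s"
        using e1 cinner_commute[of w0 x] by simp
      hence "cinner z x = (f w0 / complex_of_real s) * (\<alpha> * complex_of_real s)"
        by (simp add: z_def cinner_scaleC_left)
      also have "\<dots> = f x" using s0 fw0 w by (simp add: \<alpha>_def)
      finally show ?thesis .
    qed
    thus ?thesis using zX by blast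
  qed
qed

lemma adj_exists:
  fixes A :: "'a::chilbert_space \<Rightarrow> 'b::complex_inner"
  assumes X: "closed_csubspace X" and A: "bounded_clinear_on X UNIV A"
  shows "\<exists>z\<in>X. \<forall>x\<in>X. cinner (A x) y = cinner x z"
proof -
  have Xs: "csubspace X" using ccsub[OF X] .
  obtain K where K: "K \<ge> 0" "\<forall>x\<in>X. norm (A x) \<le> norm x * K" using blin_bound[OF A] by blast
  have "\<exists>z\<in>X. \<forall>x\<in>X. cinner z x = cinner y (A x)"
  proof (rule riesz[OF X, of _ "norm y * K"])
    show "\<forall>x\<in>X. \<forall>x'\<in>X. cinner y (A (x + x')) = cinner y (A x) + cinner y (A x')"
      using blin_add[OF A] cinner_add_right by metis
    show "\<forall>c. \<forall>x\<in>X. cinner y (A (c *\<^sub>C x)) = c * cinner y (A x)"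
      using blin_scaleC[OF A] cinner_scaleC_right by metis
    show "\<forall>x\<in>X. cmod (cinner y (A x)) \<le> norm y * K * norm x"
    proof
      fix x assume "x \<in> X"
      have "cmod (cinner y (A x)) \<le> norm y * norm (A x)" by (rule cauchy_schwarz)
      also have "\<dots> \<le> norm y * (norm x * K)" using K \<open>x \<in> X\<close> by (intro mult_left_mono) auto
      finally show "cmod (cinner y (A x)) \<le> norm y * K * norm x" by (simp add: algebra_simps)
    qed
  qed
  then obtain z where z: "z \<in> X" "\<forall>x\<in>X. cinner z x = cinner y (A x)" by blast
  have "\<forall>x\<in>X. cinner (A x) y = cinner x z"
  proof
    fix x assume "x \<in> X"
    hence "cinner z x = cinner y (A x)" using z(2) by blast
    hence "cnj (cinner z x) = cnj (cinner y (A x))" by simp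
    thus "cinner (A x) y = cinner x z" using cinner_commute[of x z] cinner_commute[of "A x" y] by simp
  qed
  thus ?thesis using z(1) by blast
qed

lemma adj_unique:
  fixes A :: "'a::chilbert_space \<Rightarrow> 'b::complex_inner"
  assumes X: "closed_csubspace X" and A: "bounded_clinear_on X UNIV A"
    and z: "z \<in> X" "\<forall>x\<in>X. cinner (A x) y = cinner x z"
  shows "adj_on X A y = z"
proof -
  have Xs: "csubspace X" using ccsub[OF X] .
  have uniq: "z1 = z2" if "z1 \<in> X" "\<forall>x\<in>X. cinner (A x) y = cinner x z1"
     "z2 \<in> X" "\<forall>x\<in>X. cinner (A x) y = cinner x z2" for z1 z2
  proof -
    have d: "z1 - z2 \<in> X" using csub_diff[OF Xs] that by blast
    have e1: "cinner (A (z1 - z2)) y = cinner (z1 - z2) z1" using that(2) d by blast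
    have e2: "cinner (A (z1 - z2)) y = cinner (z1 - z2) z2" using that(4) d by blast
    have "cinner (z1 - z2) z1 = cinner (z1 - z2) z2" using e1 e2 by argo
    hence "cinner (z1 - z2) (z1 - z2) = 0" by (simp add: cinner_diff_right)
    hence "z1 - z2 = 0" by (simp only: cinner_eq_zero_iff)
    thus ?thesis by simp
  qed
  have "adj_on X A y \<in> X \<and> (\<forall>x\<in>X. cinner (A x) y = cinner x (adj_on X A y))"
    unfolding adj_on_def
  proof (rule theI)
    show "z \<in> X \<and> (\<forall>x\<in>X. cinner (A x) y = cinner x z)" using z by blast
  next
    fix z' assume "z' \<in> X \<and> (\<forall>x\<in>X. cinner (A x) y = cinner x z')"
    thus "z' = z" using uniq[of z' z] z by blast
  qed
  thus ?thesis using uniq[of "adj_on X A y" z] z by blast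
qed

lemma adj_char:
  fixes A :: "'a::chilbert_space \<Rightarrow> 'b::complex_inner"
  assumes X: "closed_csubspace X" and A: "bounded_clinear_on X UNIV A"
  shows "adj_on X A y \<in> X" "\<And>x. x \<in> X \<Longrightarrow> cinner (A x) y = cinner x (adj_on X A y)"
proof -
  obtain z where z: "z \<in> X" "\<forall>x\<in>X. cinner (A x) y = cinner x z" using adj_exists[OF X A] by blast
  have e: "adj_on X A y = z" using adj_unique[OF X A z] .
  show "adj_on X A y \<in> X" unfolding e by (rule z(1))
  show "\<And>x. x \<in> X \<Longrightarrow> cinner (A x) y = cinner x (adj_on X A y)" unfolding e using z(2) by blast
qed

lemma adj_add:
  fixes A :: "'a::chilbert_space \<Rightarrow> 'b::complex_inner"
  assumes X: "closed_csubspace X" and A: "bounded_clinear_on X UNIV A"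
  shows "adj_on X A (y1 + y2) = adj_on X A y1 + adj_on X A y2"
proof (rule adj_unique[OF X A])
  show "adj_on X A y1 + adj_on X A y2 \<in> X"
    by (intro csub_add[OF ccsub[OF X]] adj_char(1)[OF X A])
  show "\<forall>x\<in>X. cinner (A x) (y1 + y2) = cinner x (adj_on X A y1 + adj_on X A y2)"
  proof
    fix x assume x: "x \<in> X"
    have "cinner (A x) (y1 + y2) = cinner (A x) y1 + cinner (A x) y2" by (rule cinner_add_right)
    also have "\<dots> = cinner x (adj_on X A y1) + cinner x (adj_on X A y2)"
      using adj_char(2)[OF X A x, of y1] adj_char(2)[OF X A x, of y2] by argo
    also have "\<dots> = cinner x (adj_on X A y1 + adj_on X A y2)" by (rule cinner_add_right[symmetric])
    finally show "cinner (A x) (y1 + y2) = cinner x (adj_on X A y1 + adj_on X A y2)" .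
  qed
qed

lemma adj_scaleC:
  fixes A :: "'a::chilbert_space \<Rightarrow> 'b::complex_inner"
  assumes X: "closed_csubspace X" and A: "bounded_clinear_on X UNIV A"
  shows "adj_on X A (c *\<^sub>C y) = c *\<^sub>C adj_on X A y"
proof (rule adj_unique[OF X A])
  show "c *\<^sub>C adj_on X A y \<in> X"
    by (intro csub_scaleC[OF ccsub[OF X]] adj_char(1)[OF X A])
  show "\<forall>x\<in>X. cinner (A x) (c *\<^sub>C y) = cinner x (c *\<^sub>C adj_on X A y)"
  proof
    fix x assume x: "x \<in> X"
    have "cinner (A x) (c *\<^sub>C y) = c * cinner (A x) y" by (rule cinner_scaleC_right)
    also have "\<dots> = c * cinner x (adj_on X A y)"
      using adj_char(2)[OF X A x, of y] by argo
    also have "\<dots> = cinner x (c *\<^sub>C adj_on X A y)" by (rule cinner_scaleC_right[symmetric])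
    finally show "cinner (A x) (c *\<^sub>C y) = cinner x (c *\<^sub>C adj_on X A y)" .
  qed
qed

lemma adj_bound:
  fixes A :: "'a::chilbert_space \<Rightarrow> 'b::complex_inner"
  assumes X: "closed_csubspace X" and A: "bounded_clinear_on X UNIV A"
    and K: "K \<ge> 0" "\<forall>x\<in>X. norm (A x) \<le> norm x * K"
  shows "norm (adj_on X A y) \<le> K * norm y"
proof -
  define z where "z = adj_on X A y"
  have zX: "z \<in> X" using adj_char(1)[OF X A] by (simp add: z_def)
  have "cinner (A z) y = cinner z z" using adj_char(2)[OF X A zX, of y] unfolding z_def .
  hence "(norm z)\<^sup>2 = cmod (cinner (A z) y)" by (simp only: cinner_self norm_of_real) simp
  also have "\<dots> \<le> norm (A z) * norm y" by (rule cauchy_schwarz)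
  also have "\<dots> \<le> norm z * K * norm y" using K zX by (intro mult_right_mono) auto
  finally have "norm z * norm z \<le> norm z * (K * norm y)" by (simp add: power2_eq_square algebra_simps)
  thus ?thesis unfolding z_def[symmetric]
    by (cases "norm z = 0") (use K in \<open>auto intro: mult_nonneg_nonneg\<close>)
qed

definition cptseq :: "'a::complex_normed_vector set \<Rightarrow> ('a \<Rightarrow> 'b::complex_normed_vector) \<Rightarrow> bool" where
  "cptseq D K \<longleftrightarrow> (\<forall>s::nat\<Rightarrow>'a. (\<forall>m. s m \<in> D \<and> norm (s m) \<le> 1) \<longrightarrow> (\<exists>r::nat\<Rightarrow>nat. strict_mono r \<and> convergent (\<lambda>m. K (s (r m)))))"

lemma compact_op_cptseq:
  fixes K :: "'a::complex_normed_vector \<Rightarrow> 'b::complex_normed_vector"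
  assumes "compact_op_on X Y K" shows "cptseq X K"
  unfolding cptseq_def
proof (intro allI impI)
  fix s :: "nat \<Rightarrow> 'a" assume s: "\<forall>m. s m \<in> X \<and> norm (s m) \<le> 1"
  have cp: "compact (closure (K ` (X \<inter> cball 0 1)))" using assms by (simp add: compact_op_on_def)
  have "\<forall>m. K (s m) \<in> closure (K ` (X \<inter> cball 0 1))"
    using s closure_subset by (fastforce simp: mem_cball dist_norm)
  then obtain l r where "strict_mono r" "((\<lambda>m. K (s m)) \<circ> r) \<longlonglongrightarrow> l"
    using seq_compactE[OF compact_imp_seq_compact[OF cp]] by metis
  thus "\<exists>r. strict_mono r \<and> convergent (\<lambda>m. K (s (r m)))"
    by (auto simp: convergent_def o_def)
qed

lemma cptseq_zero: "cptseq D (\<lambda>x. 0)"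
  unfolding cptseq_def by (auto intro!: exI[of _ id] strict_mono_id simp: convergent_const)

lemma scaleC_zero_right: "c *\<^sub>C (0::'a::complex_vector) = 0"
proof -
  have "c *\<^sub>C (0::'a) = c *\<^sub>C 0 + c *\<^sub>C 0" by (metis add_0 scaleC_add_right)
  thus ?thesis by simp
qed

section \<open>Kernel and its complement\<close>

lemma ker_ccsub:
  fixes A :: "'a::chilbert_space \<Rightarrow> 'b::complex_inner"
  assumes X: "closed_csubspace X" and A: "bounded_clinear_on X UNIV A"
  shows "closed_csubspace (ker_on X A)"
proof -
  have Xs: "csubspace X" using ccsub[OF X] .
  have "csubspace (ker_on X A)"
    unfolding csubspace_def ker_on_def
    using csub_0[OF Xs] csub_add[OF Xs] csub_scaleC[OF Xs] blin_0[OF A Xs] blin_add[OF A] blin_scaleC[OF A]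
    by (auto simp: scaleC_zero_right)
  moreover have "closed (ker_on X A)"
    unfolding closed_sequential_limits
  proof (intro allI impI, elim conjE)
    fix xs l assume xs: "\<forall>m. xs m \<in> ker_on X A" and l: "xs \<longlonglongrightarrow> l"
    have xsX: "\<forall>m. xs m \<in> X" using xs by (simp add: ker_on_def)
    have lX: "l \<in> X" using ccsub_closed[OF X] closed_sequential_limits xsX l by blast
    have "(\<lambda>m. A (xs m)) \<longlonglongrightarrow> A l" using blin_cont[OF A Xs xsX lX l] .
    moreover have "(\<lambda>m. A (xs m)) = (\<lambda>m. 0)" using xs by (simp add: ker_on_def)
    ultimately have "A l = 0" using LIMSEQ_const_iff by metis
    thus "l \<in> ker_on X A" using lX by (simp add: ker_on_def)
  qed
  ultimately show ?thesis by (simp add: closed_csubspace_def)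
qed

lemma orth_ccsub:
  fixes X :: "'a::chilbert_space set"
  assumes X: "closed_csubspace X"
  shows "closed_csubspace (orth_diff X S)" "orth_diff X S \<subseteq> X"
proof -
  have Xs: "csubspace X" using ccsub[OF X] .
  have "csubspace (orth_diff X S)"
    unfolding csubspace_def orth_diff_def
    using csub_0[OF Xs] csub_add[OF Xs] csub_scaleC[OF Xs]
    by (auto simp: cinner_add_right cinner_scaleC_right)
  moreover have "closed (orth_diff X S)"
    unfolding closed_sequential_limits
  proof (intro allI impI, elim conjE)
    fix xs l assume xs: "\<forall>m. xs m \<in> orth_diff X S" and l: "xs \<longlonglongrightarrow> l"
    have xsX: "\<forall>m. xs m \<in> X" using xs by (simp add: orth_diff_def)
    have lX: "l \<in> X" using ccsub_closed[OF X] closed_sequential_limits xsX l by blast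
    have "cinner s l = 0" if "s \<in> S" for s
    proof -
      have "(\<lambda>m. cinner s (xs m)) \<longlonglongrightarrow> cinner s l" by (rule cinner_tendsto_right[OF l])
      moreover have "(\<lambda>m. cinner s (xs m)) = (\<lambda>m. 0)" using xs that by (simp add: orth_diff_def)
      ultimately show ?thesis using LIMSEQ_const_iff by metis
    qed
    thus "l \<in> orth_diff X S" using lX by (simp add: orth_diff_def)
  qed
  ultimately show "closed_csubspace (orth_diff X S)" by (simp add: closed_csubspace_def)
  show "orth_diff X S \<subseteq> X" by (auto simp: orth_diff_def)
qed

lemma decomp_D:
  fixes A :: "'a::chilbert_space \<Rightarrow> 'b::complex_inner"
  assumes X: "closed_csubspace X" and A: "bounded_clinear_on X UNIV A" and x: "x \<in> X"
  shows "\<exists>d\<in>orth_diff X (ker_on X A). A d = A x"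
proof -
  have Xs: "csubspace X" using ccsub[OF X] .
  obtain p where p: "p \<in> ker_on X A" "\<forall>s\<in>ker_on X A. cinner s (x - p) = 0"
    using proj_exists[OF ker_ccsub[OF X A]] by blast
  have pX: "p \<in> X" "A p = 0" using p(1) by (auto simp: ker_on_def)
  have dX: "x - p \<in> X" using csub_diff[OF Xs x pX(1)] .
  have "x - p \<in> orth_diff X (ker_on X A)" using dX p(2) by (simp add: orth_diff_def)
  moreover have "A (x - p) = A x" using blin_diff[OF A Xs x pX(1)] pX(2) by simp
  ultimately show ?thesis by blast
qed

lemma D_inj:
  assumes "d \<in> orth_diff X (ker_on X A)" "A d = 0"
  shows "d = 0"
proof -
  have "d \<in> ker_on X A" using assms by (simp add: orth_diff_def ker_on_def)
  hence "cinner d d = 0" using assms(1) by (simp add: orth_diff_def)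
  thus ?thesis by (simp only: cinner_eq_zero_iff)
qed

section \<open>Operator norm and essential norm unpacking\<close>

lemma opnorm_bound:
  assumes T: "bounded_clinear_on X Y T" and Xs: "csubspace X" and c: "op_norm_on X T \<le> c"
    and x: "x \<in> X"
  shows "norm (T x) \<le> c * norm x"
proof -
  obtain K where K: "K \<ge> 0" "\<forall>x\<in>X. norm (T x) \<le> norm x * K" using blin_bound[OF T] by blast
  define S where "S = {norm (T x) | x. x \<in> X \<and> norm x \<le> 1}"
  have bdd: "bdd_above S"
  proof (rule bdd_aboveI[of _ K])
    fix t assume "t \<in> S"
    then obtain y where y: "t = norm (T y)" "y \<in> X" "norm y \<le> 1" by (auto simp: S_def)
    have "norm (T y) \<le> norm y * K" using K y by blast
    also have "\<dots> \<le> 1 * K" using y K by (intro mult_right_mono) auto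
    finally show "t \<le> K" using y by simp
  qed
  show ?thesis
  proof (cases "x = 0")
    case True
    then show ?thesis using blin_0[OF T Xs] by simp
  next
    case False
    define u where "u = (1 / norm x) *\<^sub>R x"
    have uX: "u \<in> X" using csub_scaleR[OF Xs x] by (simp add: u_def)
    have nu: "norm u = 1" using False by (simp add: u_def)
    have "norm (T u) \<in> S" using uX nu by (auto simp: S_def)
    hence "norm (T u) \<le> Sup S" using bdd by (rule cSup_upper)
    hence "norm (T u) \<le> c" using c by (simp add: op_norm_on_def S_def)
    moreover have "T u = (1 / norm x) *\<^sub>R T x" using blin_scaleR[OF T x] by (simp add: u_def)
    ultimately have "norm (T x) / norm x \<le> c" by simp
    thus ?thesis using False by (simp add: field_simps)
  qed
qed

lemma zero_compact_op:
  assumes "csubspace X" "csubspace Y" shows "compact_op_on X Y (\<lambda>x. 0)"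
proof -
  have "(\<lambda>x. 0::'b) ` (X \<inter> cball 0 1) = {0}" using csub_0[OF assms(1)] by auto
  thus ?thesis using assms unfolding compact_op_on_def bounded_clinear_on_def
    by (auto simp: csub_0 scaleC_zero_right intro!: exI[of _ 0])
qed


lemma ess_norm_unpack:
  assumes Xs: "csubspace X" and Ys: "csubspace Y" and e: "ess_norm X Y T \<le> e" and \<eta>: "\<eta> > 0"
  shows "\<exists>K. compact_op_on X Y K \<and> op_norm_on X (\<lambda>x. T x + K x) < e + \<eta>"
proof -
  define S where "S = {op_norm_on X (\<lambda>x. T x + K x) | K. compact_op_on X Y K}"
  have ne: "S \<noteq> {}" using zero_compact_op[OF Xs Ys] by (auto simp: S_def)
  have "Inf S < e + \<eta>" using e \<eta> by (simp add: ess_norm_def S_def)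
  then obtain t where "t \<in> S" "t < e + \<eta>" using cInf_lessD[OF ne] by blast
  thus ?thesis by (auto simp: S_def)
qed

lemma erm_unpack:
  fixes A :: "'a::chilbert_space \<Rightarrow> 'b::chilbert_space"
  assumes X: "closed_csubspace X" and A: "bounded_clinear_on X UNIV A" and \<gamma>: "\<gamma> > 0"
    and c1: "ess_red_min_mod X A \<ge> ereal \<gamma>" and \<theta>: "\<theta> > 0"
  shows "\<exists>g K. g \<ge> 0 \<and> g > \<gamma> - \<theta> \<and> bounded_clinear_on (orth_diff X (ker_on X A)) (orth_diff X (ker_on X A)) K
     \<and> cptseq (orth_diff X (ker_on X A)) K
     \<and> (\<forall>x\<in>orth_diff X (ker_on X A). g\<^sup>2 * (norm x)\<^sup>2 - Re (cinner x (K x)) \<le> (norm (A x))\<^sup>2)"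
proof -
  define D where "D = orth_diff X (ker_on X A)"
  have Dcc: "closed_csubspace D" "D \<subseteq> X" using orth_ccsub[OF X] by (auto simp: D_def)
  have Ds: "csubspace D" using ccsub[OF Dcc(1)] .
  show ?thesis
  proof (cases "\<forall>x\<in>X. A x = 0")
    case True
    have "bounded_clinear_on D D (\<lambda>x. 0)" using zero_compact_op[OF Ds Ds] by (simp add: compact_op_on_def)
    moreover have "\<forall>x\<in>D. \<gamma>\<^sup>2 * (norm x)\<^sup>2 - Re (cinner x 0) \<le> (norm (A x))\<^sup>2"
    proof
      fix x assume x: "x \<in> D"
      have "A x = 0" using True x Dcc(2) by blast
      hence "x = 0" using D_inj x by (simp add: D_def)
      thus "\<gamma>\<^sup>2 * (norm x)\<^sup>2 - Re (cinner x 0) \<le> (norm (A x))\<^sup>2" by simp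
    qed
    ultimately show ?thesis using \<gamma> \<theta> cptseq_zero unfolding D_def[symmetric]
      by (intro exI[of _ \<gamma>] exI[of _ "\<lambda>x. 0"]) auto
  next
    case False
    define B where "B = (\<lambda>x. adj_on X A (A x))"
    define SS where "SS = {ereal g | g. g \<ge> 0 \<and>
                  (\<exists>K. compact_op_on D D K \<and> selfadjoint_on D K \<and>
                       (\<forall>x\<in>D. Re (cinner (B x + K x) x) \<ge> g\<^sup>2 * (norm x)\<^sup>2))}"
    have "ess_red_min_mod X A = Sup SS"
      unfolding ess_red_min_mod_def by (subst if_not_P[OF False]) (simp add: Let_def SS_def D_def B_def)
    moreover have "ereal (\<gamma> - \<theta>) < ereal \<gamma>" using \<theta> by simp
    ultimately have "ereal (\<gamma> - \<theta>) < Sup SS" using c1 by (metis less_le_trans)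
    then obtain t where "t \<in> SS" "ereal (\<gamma> - \<theta>) < t" using less_Sup_iff by blast
    then obtain g K where g: "g \<ge> 0" "\<gamma> - \<theta> < g" "compact_op_on D D K"
      "\<forall>x\<in>D. Re (cinner (B x + K x) x) \<ge> g\<^sup>2 * (norm x)\<^sup>2"
      by (auto simp: SS_def)
    have "\<forall>x\<in>D. g\<^sup>2 * (norm x)\<^sup>2 - Re (cinner x (K x)) \<le> (norm (A x))\<^sup>2"
    proof
      fix x assume x: "x \<in> D"
      have xX: "x \<in> X" using x Dcc(2) by blast
      have "cinner (A x) (A x) = cinner x (B x)" unfolding B_def by (rule adj_char(2)[OF X A xX])
      hence "Re (cinner (B x) x) = (norm (A x))\<^sup>2"
        by (simp add: norm_sq_Re Re_cinner_commute[of "B x" x])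
      moreover have "Re (cinner (B x + K x) x) = Re (cinner (B x) x) + Re (cinner x (K x))"
        by (simp add: cinner_add_left Re_cinner_commute[of "K x" x])
      moreover have "g\<^sup>2 * (norm x)\<^sup>2 \<le> Re (cinner (B x + K x) x)" using g(4) x by blast
      ultimately show "g\<^sup>2 * (norm x)\<^sup>2 - Re (cinner x (K x)) \<le> (norm (A x))\<^sup>2" by linarith
    qed
    moreover have "bounded_clinear_on D D K" using g(3) by (simp add: compact_op_on_def)
    moreover have "cptseq D K" using compact_op_cptseq[OF g(3)] .
    ultimately show ?thesis using g(1,2) unfolding D_def[symmetric] by blast
  qed
qed

lemma cross_unpack:
  fixes Ai :: "'a::chilbert_space \<Rightarrow> 'b::chilbert_space"
  assumes Xi: "closed_csubspace Xi" and Xj: "closed_csubspace Xj"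
    and Ai: "bounded_clinear_on Xi UNIV Ai" and Aj: "bounded_clinear_on Xj UNIV Aj"
    and c2: "ess_norm Xj Xi (\<lambda>x. adj_on Xi Ai (Aj x)) \<le> e" and \<eta>: "\<eta> > 0"
  shows "\<exists>K. bounded_clinear_on Xj Xi K \<and> cptseq Xj K \<and>
     (\<forall>x\<in>Xi. \<forall>y\<in>Xj. - (e + \<eta>) * norm x * norm y - Re (cinner x (K y)) \<le> Re (cinner (Ai x) (Aj y)))"
proof -
  have Xis: "csubspace Xi" using ccsub[OF Xi] .
  have Xjs: "csubspace Xj" using ccsub[OF Xj] .
  define S where "S = (\<lambda>x. adj_on Xi Ai (Aj x))"
  obtain K where K: "compact_op_on Xj Xi K" "op_norm_on Xj (\<lambda>x. S x + K x) < e + \<eta>"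
    using ess_norm_unpack[OF Xjs Xis c2 \<eta>] unfolding S_def by blast
  have Kb: "bounded_clinear_on Xj Xi K" using K(1) by (simp add: compact_op_on_def)
  obtain Ki where Ki: "Ki \<ge> 0" "\<forall>x\<in>Xi. norm (Ai x) \<le> norm x * Ki" using blin_bound[OF Ai] by blast
  obtain Kj where Kj: "Kj \<ge> 0" "\<forall>x\<in>Xj. norm (Aj x) \<le> norm x * Kj" using blin_bound[OF Aj] by blast
  obtain KK where KK: "KK \<ge> 0" "\<forall>x\<in>Xj. norm (K x) \<le> norm x * KK" using blin_bound[OF Kb] by blast
  have T: "bounded_clinear_on Xj UNIV (\<lambda>x. S x + K x)"
    unfolding bounded_clinear_on_def
  proof (intro conjI ballI allI)
    show "(\<lambda>x. S x + K x) ` Xj \<subseteq> UNIV" by simp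
  next
    fix x y assume xy: "x \<in> Xj" "y \<in> Xj"
    show "S (x + y) + K (x + y) = S x + K x + (S y + K y)"
      unfolding S_def using blin_add[OF Aj xy] blin_add[OF Kb xy] adj_add[OF Xi Ai] by (simp add: algebra_simps)
  next
    fix c x assume x: "x \<in> Xj"
    show "S (c *\<^sub>C x) + K (c *\<^sub>C x) = c *\<^sub>C (S x + K x)"
      unfolding S_def using blin_scaleC[OF Aj x] blin_scaleC[OF Kb x] adj_scaleC[OF Xi Ai]
      by (simp add: scaleC_add_right)
  next
    show "\<exists>M. \<forall>x\<in>Xj. norm (S x + K x) \<le> norm x * M"
    proof (intro exI ballI)
      fix x assume x: "x \<in> Xj"
      have "norm (S x) \<le> Ki * norm (Aj x)" unfolding S_def by (rule adj_bound[OF Xi Ai Ki])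
      also have "\<dots> \<le> Ki * (norm x * Kj)" using Ki Kj x by (intro mult_left_mono) auto
      finally have "norm (S x) \<le> norm x * (Ki * Kj)" by (simp add: algebra_simps)
      moreover have "norm (K x) \<le> norm x * KK" using KK x by blast
      ultimately show "norm (S x + K x) \<le> norm x * (Ki * Kj + KK)"
        using norm_triangle_ineq[of "S x" "K x"] by (simp add: algebra_simps)
    qed
  qed
  have Tb: "norm (S y + K y) \<le> (e + \<eta>) * norm y" if "y \<in> Xj" for y
    using opnorm_bound[OF T Xjs _ that] K(2) by simp
  have "\<forall>x\<in>Xi. \<forall>y\<in>Xj. - (e + \<eta>) * norm x * norm y - Re (cinner x (K y)) \<le> Re (cinner (Ai x) (Aj y))"
  proof (intro ballI)
    fix x y assume x: "x \<in> Xi" and y: "y \<in> Xj"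
    have "cinner (Ai x) (Aj y) = cinner x (S y)" unfolding S_def by (rule adj_char(2)[OF Xi Ai x])
    hence e1: "Re (cinner (Ai x) (Aj y)) = Re (cinner x (S y + K y)) - Re (cinner x (K y))"
      by (simp add: cinner_add_right)
    have "Re (cinner x (S y + K y)) \<ge> - cmod (cinner x (S y + K y))"
      using abs_Re_le_cmod[of "cinner x (S y + K y)"] by linarith
    moreover have "cmod (cinner x (S y + K y)) \<le> norm x * ((e + \<eta>) * norm y)"
    proof -
      have "cmod (cinner x (S y + K y)) \<le> norm x * norm (S y + K y)" by (rule cauchy_schwarz)
      also have "\<dots> \<le> norm x * ((e + \<eta>) * norm y)" using Tb[OF y] by (intro mult_left_mono) auto
      finally show ?thesis .
    qed
    ultimately show "- (e + \<eta>) * norm x * norm y - Re (cinner x (K y)) \<le> Re (cinner (Ai x) (Aj y))"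
      using e1 by (simp add: algebra_simps)
  qed
  thus ?thesis using Kb compact_op_cptseq[OF K(1)] by blast
qed

lemma common_subseq:
  fixes f :: "'p \<Rightarrow> nat \<Rightarrow> 'b::topological_space"
  assumes "finite P"
    and "\<forall>p\<in>P. \<forall>r::nat\<Rightarrow>nat. strict_mono r \<longrightarrow> (\<exists>r'::nat\<Rightarrow>nat. strict_mono r' \<and> convergent (\<lambda>m. f p (r (r' m))))"
  shows "\<exists>r. strict_mono r \<and> (\<forall>p\<in>P. convergent (\<lambda>m. f p (r m)))"
  using assms
proof (induction P rule: finite_induct)
  case empty
  then show ?case by (intro exI[of _ "\<lambda>m. m"]) (auto simp: strict_mono_def)
next
  case (insert p P)
  then obtain r where r: "strict_mono r" "\<forall>q\<in>P. convergent (\<lambda>m. f q (r m))" by blast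
  have hp: "\<forall>r::nat\<Rightarrow>nat. strict_mono r \<longrightarrow> (\<exists>r'::nat\<Rightarrow>nat. strict_mono r' \<and> convergent (\<lambda>m. f p (r (r' m))))"
    using insert.prems by simp
  obtain r' where r': "strict_mono r'" "convergent (\<lambda>m. f p (r (r' m)))" using hp r(1) by blast
  have "\<forall>q\<in>P. convergent (\<lambda>m. f q (r (r' m)))"
  proof
    fix q assume "q \<in> P"
    hence "convergent ((\<lambda>m. f q (r m)) \<circ> r')" using r(2) convergent_subseq_convergent r'(1) by blast
    thus "convergent (\<lambda>m. f q (r (r' m)))" by (simp add: o_def)
  qed
  moreover have "strict_mono (r \<circ> r')" using strict_mono_o[OF r(1) r'(1)] .
  ultimately show ?case using r'(2) by (intro exI[of _ "r \<circ> r'"]) (auto simp: o_def)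
qed

lemma posdef_coercive:
  fixes Q :: "nat \<Rightarrow> nat \<Rightarrow> real"
  assumes fin: "finite I"
    and pd: "\<forall>v. (\<exists>i\<in>I. v i \<noteq> 0) \<longrightarrow> (\<Sum>i\<in>I. \<Sum>j\<in>I. v i * Q i j * v j) > 0"
  shows "\<exists>c0>0. \<forall>v. c0 * (\<Sum>i\<in>I. (v i)\<^sup>2) \<le> (\<Sum>i\<in>I. \<Sum>j\<in>I. v i * Q i j * v j)"
proof (rule ccontr)
  define q where "q v = (\<Sum>i\<in>I. \<Sum>j\<in>I. v i * Q i j * v j)" for v :: "nat \<Rightarrow> real"
  define s where "s v = (\<Sum>i\<in>I. (v i)\<^sup>2)" for v :: "nat \<Rightarrow> real"
  assume "\<not> ?thesis"
  hence neg: "\<forall>c0>0. \<exists>v. q v < c0 * s v" by (auto simp: q_def s_def not_le)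
  have "\<forall>m. \<exists>v. s v = 1 \<and> q v < 1 / real (Suc m)"
  proof
    fix m
    obtain v where v: "q v < (1 / real (Suc m)) * s v" using neg by (metis divide_pos_pos of_nat_0_less_iff zero_less_Suc zero_less_one)
    have s0: "s v \<ge> 0" by (simp add: s_def sum_nonneg)
    have "s v \<noteq> 0"
    proof
      assume "s v = 0"
      hence "\<forall>i\<in>I. (v i)\<^sup>2 = 0" using fin by (simp add: s_def sum_nonneg_eq_0_iff)
      hence "q v = 0" by (simp add: q_def)
      thus False using v \<open>s v = 0\<close> by simp
    qed
    hence sp: "s v > 0" using s0 by simp
    define w where "w i = v i / sqrt (s v)" for i
    have "s w = s v / s v" unfolding s_def w_def
      using sp[unfolded s_def] by (simp add: power_divide sum_divide_distrib[symmetric])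
    hence sw: "s w = 1" using sp by simp
    have "q w = q v / s v" unfolding q_def w_def using sp
      by (simp add: sum_divide_distrib[symmetric] field_simps power2_eq_square[symmetric])
    also have "\<dots> < 1 / real (Suc m)" using v sp by (simp add: divide_less_eq)
    finally show "\<exists>v. s v = 1 \<and> q v < 1 / real (Suc m)" using sw by blast
  qed
  then obtain V where V: "\<And>m. s (V m) = 1" "\<And>m. q (V m) < 1 / real (Suc m)" by metis
  have bnd: "V m i \<in> {-1..1}" if "i \<in> I" for m i
  proof -
    have "(V m i)\<^sup>2 \<le> s (V m)" unfolding s_def
      using fin that by (intro member_le_sum) auto
    hence "(V m i)\<^sup>2 \<le> 1" using V(1) by simp
    thus ?thesis by (simp add: abs_square_le_1 abs_le_iff)
  qed
  have "\<exists>r. strict_mono r \<and> (\<forall>i\<in>I. convergent (\<lambda>m. V (r m) i))"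
  proof (rule common_subseq[OF fin], intro ballI allI impI)
    fix i r assume i: "i \<in> I" and r: "strict_mono (r::nat\<Rightarrow>nat)"
    have "\<forall>m. V (r m) i \<in> {-1..1}" using bnd i by blast
    then obtain l r' where "strict_mono r'" "((\<lambda>m. V (r m) i) \<circ> r') \<longlonglongrightarrow> l"
      using seq_compactE[OF compact_imp_seq_compact[OF compact_Icc]] by metis
    thus "\<exists>r'. strict_mono r' \<and> convergent (\<lambda>m. V (r (r' m)) i)" by (auto simp: convergent_def o_def)
  qed
  then obtain r where r: "strict_mono r" "\<forall>i\<in>I. convergent (\<lambda>m. V (r m) i)" by blast
  define w where "w i = lim (\<lambda>m. V (r m) i)" for i
  have wl: "(\<lambda>m. V (r m) i) \<longlonglongrightarrow> w i" if "i \<in> I" for i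
    using r(2) that by (simp add: w_def convergent_LIMSEQ_iff)
  have "(\<lambda>m. s (V (r m))) \<longlonglongrightarrow> s w" unfolding s_def by (intro tendsto_sum tendsto_power wl)
  moreover have "(\<lambda>m. s (V (r m))) = (\<lambda>m. 1)" using V(1) by simp
  ultimately have sw: "s w = 1" using LIMSEQ_const_iff by metis
  have qlim: "(\<lambda>m. q (V (r m))) \<longlonglongrightarrow> q w" unfolding q_def by (intro tendsto_sum tendsto_mult tendsto_const wl)
  have "q w \<le> 0"
  proof (rule tendsto_le[OF trivial_limit_sequentially _ qlim])
    have "(\<lambda>m. 1 / real (Suc (r m))) \<longlonglongrightarrow> 0"
    proof -
      have "(\<lambda>m. 1 / real (Suc m)) \<longlonglongrightarrow> 0" using LIMSEQ_inverse_real_of_nat by (simp add: inverse_eq_divide)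
      from LIMSEQ_subseq_LIMSEQ[OF this r(1)] show ?thesis by (simp add: o_def)
    qed
    thus "(\<lambda>m. 1 / real (Suc (r m))) \<longlonglongrightarrow> 0" .
    show "\<forall>\<^sub>F m in sequentially. q (V (r m)) \<le> 1 / real (Suc (r m))"
      using V(2) by (simp add: less_imp_le)
  qed
  moreover have "\<exists>i\<in>I. w i \<noteq> 0"
  proof (rule ccontr)
    assume "\<not> (\<exists>i\<in>I. w i \<noteq> 0)"
    hence "s w = 0" by (simp add: s_def)
    thus False using sw by simp
  qed
  ultimately show False using pd by (auto simp: q_def not_le[symmetric])
qed

lemma conv_prod0:
  fixes a :: "nat \<Rightarrow> 'b::real_normed_vector"
  assumes "convergent a"
  shows "((\<lambda>mp. a (fst mp) - a (snd mp)) \<longlongrightarrow> 0) (sequentially \<times>\<^sub>F sequentially)"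
proof -
  obtain l where l: "a \<longlonglongrightarrow> l" using assms convergent_def by blast
  have f: "((\<lambda>mp. a (fst mp)) \<longlongrightarrow> l) (sequentially \<times>\<^sub>F sequentially)"
    using filterlim_compose[OF l filterlim_fst] .
  have s: "((\<lambda>mp. a (snd mp)) \<longlongrightarrow> l) (sequentially \<times>\<^sub>F sequentially)"
    using filterlim_compose[OF l filterlim_snd] .
  show ?thesis using tendsto_diff[OF f s] by simp
qed

lemma cauchy_prod:
  fixes a :: "nat \<Rightarrow> 'b::real_normed_vector"
  assumes "((\<lambda>mp. norm (a (fst mp) - a (snd mp))) \<longlongrightarrow> 0) (sequentially \<times>\<^sub>F sequentially)"
  shows "Cauchy a"
proof (rule metric_CauchyI)
  fix e :: real assume e: "e > 0"
  have "eventually (\<lambda>mp. norm (a (fst mp) - a (snd mp)) < e) (sequentially \<times>\<^sub>F sequentially)"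
    using order_tendstoD(2)[OF assms e] .
  then obtain N where N: "\<forall>m\<ge>N. \<forall>p\<ge>N. norm (a m - a p) < e"
    unfolding eventually_prod_sequentially by auto
  thus "\<exists>M. \<forall>m\<ge>M. \<forall>n\<ge>M. dist (a m) (a n) < e" by (auto simp: dist_norm)
qed

lemma tendsto0_squeeze:
  fixes g h :: "'c \<Rightarrow> real"
  assumes "\<forall>x. 0 \<le> g x" "\<forall>x. g x \<le> h x" "(h \<longlongrightarrow> 0) F"
  shows "(g \<longlongrightarrow> 0) F"
  using assms by (intro tendsto_sandwich[of "\<lambda>_. 0" g F h]) (auto simp: always_eventually)

lemma scaleC_sum_right: "a *\<^sub>C (\<Sum>i\<in>S. f i) = (\<Sum>i\<in>S. a *\<^sub>C f i)" for f :: "_ \<Rightarrow> 'a::complex_vector"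
  by (induction S rule: infinite_finite_induct) (auto simp: scaleC_zero_right scaleC_add_right)

lemma cspan_0: "0 \<in> cspan_fin F"
  unfolding cspan_fin_def by (auto intro!: exI[of _ "\<lambda>_. 0"] simp: scaleC_zero_left)

lemma cspan_base: assumes "finite F" "v \<in> F" shows "v \<in> cspan_fin F"
proof -
  have "(\<Sum>w\<in>F. (if w = v then 1 else 0) *\<^sub>C w) = (\<Sum>w\<in>F. if w = v then w else 0)"
    by (intro sum.cong) (auto simp: scaleC_one scaleC_zero_left)
  also have "\<dots> = v" using assms by simp
  finally show ?thesis unfolding cspan_fin_def by (auto intro!: exI[of _ "\<lambda>w. if w = v then 1 else 0"])
qed

lemma cspan_add: assumes "x \<in> cspan_fin F" "y \<in> cspan_fin F" shows "x + y \<in> cspan_fin F"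
proof -
  obtain c1 c2 where "x = (\<Sum>v\<in>F. c1 v *\<^sub>C v)" "y = (\<Sum>v\<in>F. c2 v *\<^sub>C v)"
    using assms unfolding cspan_fin_def by blast
  hence "x + y = (\<Sum>v\<in>F. (c1 v + c2 v) *\<^sub>C v)" by (simp add: sum.distrib scaleC_add_left)
  thus ?thesis unfolding cspan_fin_def by (auto intro!: exI[of _ "\<lambda>v. c1 v + c2 v"])
qed

lemma cspan_scale: assumes "x \<in> cspan_fin F" shows "a *\<^sub>C x \<in> cspan_fin F"
proof -
  obtain c1 where "x = (\<Sum>v\<in>F. c1 v *\<^sub>C v)" using assms unfolding cspan_fin_def by blast
  hence "a *\<^sub>C x = (\<Sum>v\<in>F. (a * c1 v) *\<^sub>C v)" by (simp add: scaleC_sum_right scaleC_scaleC)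
  thus ?thesis unfolding cspan_fin_def by (auto intro!: exI[of _ "\<lambda>v. a * c1 v"])
qed

lemma cspan_sum: assumes "\<forall>e\<in>E. f e \<in> cspan_fin F" shows "(\<Sum>e\<in>E. c e *\<^sub>C f e) \<in> cspan_fin F"
  using assms
  by (induction E rule: infinite_finite_induct) (auto simp: cspan_0 cspan_add cspan_scale)

locale dsum =
  fixes I :: "nat set" and X :: "nat \<Rightarrow> 'a::chilbert_space set" and A :: "nat \<Rightarrow> 'a \<Rightarrow> 'b::chilbert_space"
    and Kf :: "nat \<Rightarrow> nat \<Rightarrow> 'a \<Rightarrow> 'a" and c :: real
  assumes finI: "finite I"
    and Xcc: "\<And>k. k \<in> I \<Longrightarrow> closed_csubspace (X k)"
    and Ab: "\<And>k. k \<in> I \<Longrightarrow> bounded_clinear_on (X k) UNIV (A k)"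
    and Kl: "\<And>i j. i \<in> I \<Longrightarrow> j \<in> I \<Longrightarrow> bounded_clinear_on (orth_diff (X j) (ker_on (X j) (A j))) UNIV (Kf i j)"
    and Kc: "\<And>i j. i \<in> I \<Longrightarrow> j \<in> I \<Longrightarrow> cptseq (orth_diff (X j) (ker_on (X j) (A j))) (Kf i j)"
    and cpos: "c > 0"
    and key: "\<And>x. (\<forall>k\<in>I. x k \<in> orth_diff (X k) (ker_on (X k) (A k))) \<Longrightarrow>
        c * (\<Sum>k\<in>I. (norm (x k))\<^sup>2) \<le> (norm (\<Sum>k\<in>I. A k (x k)))\<^sup>2
           + (\<Sum>i\<in>I. \<Sum>j\<in>I. Re (cinner (x i) (Kf i j (x j))))"
begin

definition D where "D k = orth_diff (X k) (ker_on (X k) (A k))"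
definition T where "T x = (\<Sum>k\<in>I. A k (x k))"
definition ip where "ip x y = (\<Sum>k\<in>I. cinner (x k) (y k))"
definition nn where "nn x = (\<Sum>k\<in>I. (norm (x k))\<^sup>2)"
definition inD where "inD x \<longleftrightarrow> (\<forall>k\<in>I. x k \<in> D k)"
definition NN where "NN = {x. inD x \<and> T x = 0}"
definition spanI where "spanI E = {x. \<exists>cf. \<forall>k\<in>I. x k = (\<Sum>e\<in>E. cf e *\<^sub>C e k)}"
definition orthn where "orthn E \<longleftrightarrow> (\<forall>e\<in>E. ip e e = 1) \<and> (\<forall>e\<in>E. \<forall>e'\<in>E. e \<noteq> e' \<longrightarrow> ip e e' = 0)"

lemma Dcc: "k \<in> I \<Longrightarrow> closed_csubspace (D k)" using orth_ccsub(1)[OF Xcc] by (simp add: D_def)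
lemma DX: "k \<in> I \<Longrightarrow> D k \<subseteq> X k" using orth_ccsub(2)[OF Xcc] by (simp add: D_def)
lemma Ds: "k \<in> I \<Longrightarrow> csubspace (D k)" using ccsub[OF Dcc] .
lemma Xs: "k \<in> I \<Longrightarrow> csubspace (X k)" using ccsub[OF Xcc] .

lemma AD: assumes "k \<in> I" shows "bounded_clinear_on (D k) UNIV (A k)"
proof -
  have "bounded_clinear_on (X k) UNIV (A k)" using Ab[OF assms] .
  then obtain K where "\<forall>x\<in>X k. \<forall>y\<in>X k. A k (x + y) = A k x + A k y"
    "\<forall>c. \<forall>x\<in>X k. A k (c *\<^sub>C x) = c *\<^sub>C A k x" "\<forall>x\<in>X k. norm (A k x) \<le> norm x * K"
    unfolding bounded_clinear_on_def by blast
  thus ?thesis using DX[OF assms] unfolding bounded_clinear_on_def by (auto simp: subset_eq intro: exI[of _ K])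
qed

lemma KD: "i \<in> I \<Longrightarrow> j \<in> I \<Longrightarrow> bounded_clinear_on (D j) UNIV (Kf i j)" using Kl by (simp add: D_def)
lemma KcD: "i \<in> I \<Longrightarrow> j \<in> I \<Longrightarrow> cptseq (D j) (Kf i j)" using Kc by (simp add: D_def)

lemma key': "inD x \<Longrightarrow> c * nn x \<le> (norm (T x))\<^sup>2 + (\<Sum>i\<in>I. \<Sum>j\<in>I. Re (cinner (x i) (Kf i j (x j))))"
  using key[of x] by (simp add: inD_def D_def T_def nn_def)

lemma nn_ge0: "nn x \<ge> 0" by (simp add: nn_def sum_nonneg)

lemma comp_le_nn: "k \<in> I \<Longrightarrow> (norm (x k))\<^sup>2 \<le> nn x"
  unfolding nn_def using finI by (intro member_le_sum) auto

lemma ip_self: "ip x x = complex_of_real (nn x)"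
  by (simp add: ip_def nn_def cinner_self)

lemma inD_diff: "inD x \<Longrightarrow> inD y \<Longrightarrow> inD (\<lambda>k. x k - y k)"
  unfolding inD_def using csub_diff[OF Ds] by blast

lemma T_diff: "inD x \<Longrightarrow> inD y \<Longrightarrow> T (\<lambda>k. x k - y k) = T x - T y"
  unfolding T_def inD_def
  by (simp add: blin_diff[OF AD Ds] sum_subtractf)

section \<open>Sequential compactness argument\<close>

lemma seq_cauchy:
  assumes xD: "\<And>m. inD (x m)" and xb: "\<And>m. nn (x m) \<le> 1" and Tc: "convergent (\<lambda>m. T (x m))"
  shows "\<exists>r. strict_mono r \<and> (\<forall>k\<in>I. Cauchy (\<lambda>m. x (r m) k))"
proof -
  have nk: "norm (x m k) \<le> 1" if "k \<in> I" for m k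
  proof -
    have "(norm (x m k))\<^sup>2 \<le> 1" using comp_le_nn[OF that, of "x m"] xb[of m] by linarith
    thus ?thesis by (simp add: power_le_one_iff abs_square_le_1)
  qed
  have "\<exists>r. strict_mono r \<and> (\<forall>p\<in>I \<times> I. convergent (\<lambda>m. Kf (fst p) (snd p) (x (r m) (snd p))))"
  proof (rule common_subseq[where f = "\<lambda>p m. Kf (fst p) (snd p) (x m (snd p))"])
    show "finite (I \<times> I)" using finI by simp
    show "\<forall>p\<in>I \<times> I. \<forall>r::nat\<Rightarrow>nat. strict_mono r \<longrightarrow>
        (\<exists>r'::nat\<Rightarrow>nat. strict_mono r' \<and> convergent (\<lambda>m. Kf (fst p) (snd p) (x (r (r' m)) (snd p))))"
    proof (intro ballI allI impI)
      fix p r assume p: "p \<in> I \<times> I" and r: "strict_mono (r::nat\<Rightarrow>nat)"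
      have pi: "fst p \<in> I" "snd p \<in> I" using p by auto
      have "\<forall>m. x (r m) (snd p) \<in> D (snd p) \<and> norm (x (r m) (snd p)) \<le> 1"
        using xD nk pi by (auto simp: inD_def)
      thus "\<exists>r'::nat\<Rightarrow>nat. strict_mono r' \<and> convergent (\<lambda>m. Kf (fst p) (snd p) (x (r (r' m)) (snd p)))"
        using KcD[OF pi, unfolded cptseq_def, rule_format, of "\<lambda>m. x (r m) (snd p)"] by simp
    qed
  qed
  then obtain r where r: "strict_mono r"
    "\<And>i j. i \<in> I \<Longrightarrow> j \<in> I \<Longrightarrow> convergent (\<lambda>m. Kf i j (x (r m) j))"
    by force
  define F where "F = (sequentially \<times>\<^sub>F sequentially :: (nat \<times> nat) filter)"
  define a where "a m = x (r (fst m))" for m :: "nat \<times> nat"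
  define b where "b m = x (r (snd m))" for m :: "nat \<times> nat"
  define d where "d mp = (\<lambda>k. a mp k - b mp k)" for mp
  define h where "h mp = (norm (T (a mp) - T (b mp)))\<^sup>2 +
      (\<Sum>i\<in>I. \<Sum>j\<in>I. 2 * norm (Kf i j (a mp j) - Kf i j (b mp j)))" for mp
  have Tsub: "convergent (\<lambda>m. T (x (r m)))"
    using convergent_subseq_convergent[OF Tc r(1)] by (simp add: o_def)
  have h0: "(h \<longlongrightarrow> 0) F"
  proof -
    have t1: "((\<lambda>mp. T (a mp) - T (b mp)) \<longlongrightarrow> 0) F"
      using conv_prod0[OF Tsub] by (simp add: F_def a_def b_def)
    have t2: "((\<lambda>mp. Kf i j (a mp j) - Kf i j (b mp j)) \<longlongrightarrow> 0) F" if "i \<in> I" "j \<in> I" for i j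
      using conv_prod0[OF r(2)[OF that]] by (simp add: F_def a_def b_def)
    have "(h \<longlongrightarrow> (norm (0::'b))\<^sup>2 + (\<Sum>i\<in>I. \<Sum>j\<in>I. 2 * norm (0::'a))) F"
      unfolding h_def by (intro tendsto_add tendsto_power tendsto_norm t1 tendsto_sum tendsto_mult tendsto_const t2)
    thus ?thesis by simp
  qed
  have abD: "inD (a mp)" "inD (b mp)" for mp using xD by (auto simp: a_def b_def)
  have bound: "c * nn (d mp) \<le> h mp" for mp
  proof -
    have dD: "inD (d mp)" unfolding d_def using inD_diff[OF abD] .
    have Td: "T (d mp) = T (a mp) - T (b mp)" unfolding d_def using T_diff[OF abD] .
    have tm: "Re (cinner (d mp i) (Kf i j (d mp j))) \<le> 2 * norm (Kf i j (a mp j) - Kf i j (b mp j))"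
      if ij: "i \<in> I" "j \<in> I" for i j
    proof -
      have ajD: "a mp j \<in> D j" "b mp j \<in> D j" using abD ij by (auto simp: inD_def)
      have Kd: "Kf i j (d mp j) = Kf i j (a mp j) - Kf i j (b mp j)"
        unfolding d_def using blin_diff[OF KD[OF ij] Ds[OF ij(2)] ajD] .
      have ndi: "norm (d mp i) \<le> 2"
      proof -
        have "norm (d mp i) \<le> norm (a mp i) + norm (b mp i)" unfolding d_def by (rule norm_triangle_ineq4)
        moreover have "norm (a mp i) \<le> 1" "norm (b mp i) \<le> 1" using nk ij by (auto simp: a_def b_def)
        ultimately show ?thesis by linarith
      qed
      have "Re (cinner (d mp i) (Kf i j (d mp j))) \<le> cmod (cinner (d mp i) (Kf i j (d mp j)))"
        by (rule complex_Re_le_cmod)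
      also have "\<dots> \<le> norm (d mp i) * norm (Kf i j (d mp j))" by (rule cauchy_schwarz)
      also have "\<dots> \<le> 2 * norm (Kf i j (d mp j))" using ndi by (intro mult_right_mono) auto
      finally show ?thesis unfolding Kd .
    qed
    have "(\<Sum>i\<in>I. \<Sum>j\<in>I. Re (cinner (d mp i) (Kf i j (d mp j))))
        \<le> (\<Sum>i\<in>I. \<Sum>j\<in>I. 2 * norm (Kf i j (a mp j) - Kf i j (b mp j)))"
      using tm by (intro sum_mono) auto
    thus ?thesis using key'[OF dD] Td by (simp add: h_def)
  qed
  have "Cauchy (\<lambda>m. x (r m) k)" if k: "k \<in> I" for k
  proof (rule cauchy_prod)
    have sq: "((\<lambda>mp. (norm (d mp k))\<^sup>2) \<longlongrightarrow> 0) F"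
    proof (rule tendsto0_squeeze)
      show "\<forall>mp. 0 \<le> (norm (d mp k))\<^sup>2" by simp
      show "\<forall>mp. (norm (d mp k))\<^sup>2 \<le> h mp / c"
        using comp_le_nn[OF k] bound cpos by (metis le_divide_eq mult.commute order_trans)
      show "((\<lambda>mp. h mp / c) \<longlongrightarrow> 0) F" using tendsto_divide_zero[OF h0] .
    qed
    have "((\<lambda>mp. sqrt ((norm (d mp k))\<^sup>2)) \<longlongrightarrow> sqrt 0) F" by (rule tendsto_real_sqrt[OF sq])
    thus "((\<lambda>mp. norm (x (r (fst mp)) k - x (r (snd mp)) k)) \<longlongrightarrow> 0) (sequentially \<times>\<^sub>F sequentially)"
      by (simp add: d_def a_def b_def F_def)
  qed
  thus ?thesis using r(1) by blast
qed

end

context dsum begin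

lemma ip_commute: "ip x y = cnj (ip y x)"
  unfolding ip_def by (subst cinner_commute) simp

lemma ip_diff_right: "ip x (\<lambda>k. y k - z k) = ip x y - ip x z"
  unfolding ip_def by (simp add: cinner_diff_right sum_subtractf)

lemma ip_diff_left: "ip (\<lambda>k. y k - z k) x = ip y x - ip z x"
  unfolding ip_def by (simp add: cinner_diff_left sum_subtractf)

lemma ip_scale_right: "ip x (\<lambda>k. a *\<^sub>C y k) = a * ip x y"
  unfolding ip_def by (simp add: cinner_scaleC_right sum_distrib_left)

lemma ip_scale_left: "ip (\<lambda>k. a *\<^sub>C y k) x = cnj a * ip y x"
  unfolding ip_def by (simp add: cinner_scaleC_left sum_distrib_left)

lemma ip_comb_right: "ip x (\<lambda>k. \<Sum>e\<in>E. cf e *\<^sub>C e k) = (\<Sum>e\<in>E. cf e * ip x e)"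
proof -
  have "ip x (\<lambda>k. \<Sum>e\<in>E. cf e *\<^sub>C e k) = (\<Sum>k\<in>I. \<Sum>e\<in>E. cf e * cinner (x k) (e k))"
    unfolding ip_def by (simp add: cinner_sum_right cinner_scaleC_right)
  also have "\<dots> = (\<Sum>e\<in>E. \<Sum>k\<in>I. cf e * cinner (x k) (e k))" by (rule sum.swap)
  also have "\<dots> = (\<Sum>e\<in>E. cf e * ip x e)" unfolding ip_def by (simp add: sum_distrib_left)
  finally show ?thesis .
qed

lemma ip_comb_left: "ip (\<lambda>k. \<Sum>e\<in>E. cf e *\<^sub>C e k) x = (\<Sum>e\<in>E. cnj (cf e) * ip e x)"
proof -
  have "ip (\<lambda>k. \<Sum>e\<in>E. cf e *\<^sub>C e k) x = (\<Sum>k\<in>I. \<Sum>e\<in>E. cnj (cf e) * cinner (e k) (x k))"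
    unfolding ip_def by (simp add: cinner_sum_left cinner_scaleC_left)
  also have "\<dots> = (\<Sum>e\<in>E. \<Sum>k\<in>I. cnj (cf e) * cinner (e k) (x k))" by (rule sum.swap)
  also have "\<dots> = (\<Sum>e\<in>E. cnj (cf e) * ip e x)" unfolding ip_def by (simp add: sum_distrib_left)
  finally show ?thesis .
qed

lemma ip_cong_left: "\<forall>k\<in>I. x k = x' k \<Longrightarrow> ip x y = ip x' y"
  unfolding ip_def by (intro sum.cong) auto

lemma nn_diff: "nn (\<lambda>k. x k - y k) = nn x + nn y - 2 * Re (ip x y)"
proof -
  have "nn (\<lambda>k. x k - y k) = (\<Sum>k\<in>I. ((norm (x k))\<^sup>2 + (norm (y k))\<^sup>2) - 2 * Re (cinner (x k) (y k)))"
    unfolding nn_def by (intro sum.cong refl) (rule norm_diff_sq)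
  also have "\<dots> = (\<Sum>k\<in>I. (norm (x k))\<^sup>2 + (norm (y k))\<^sup>2) - (\<Sum>k\<in>I. 2 * Re (cinner (x k) (y k)))"
    by (rule sum_subtractf)
  also have "(\<Sum>k\<in>I. (norm (x k))\<^sup>2 + (norm (y k))\<^sup>2) = nn x + nn y"
    unfolding nn_def by (rule sum.distrib)
  also have "(\<Sum>k\<in>I. 2 * Re (cinner (x k) (y k))) = 2 * Re (ip x y)"
    unfolding ip_def by (simp add: sum_distrib_left Re_sum)
  finally show ?thesis .
qed

lemma nn_zero: "nn x = 0 \<Longrightarrow> k \<in> I \<Longrightarrow> x k = 0"
  using comp_le_nn[of k x] by simp

lemma inD_comb: assumes "\<forall>e\<in>E. inD e" shows "inD (\<lambda>k. \<Sum>e\<in>E. cf e *\<^sub>C e k)"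
  unfolding inD_def
proof
  fix k assume k: "k \<in> I"
  show "(\<Sum>e\<in>E. cf e *\<^sub>C e k) \<in> D k"
  proof (rule csub_sum[OF Ds[OF k]])
    fix e assume "e \<in> E"
    hence "e k \<in> D k" using assms k by (simp add: inD_def)
    thus "cf e *\<^sub>C e k \<in> D k" by (rule csub_scaleC[OF Ds[OF k]])
  qed
qed

lemma inD_scale: assumes "inD x" shows "inD (\<lambda>k. a *\<^sub>C x k)"
  unfolding inD_def
proof
  fix k assume k: "k \<in> I"
  hence "x k \<in> D k" using assms by (simp add: inD_def)
  thus "a *\<^sub>C x k \<in> D k" by (rule csub_scaleC[OF Ds[OF k]])
qed

lemma T_comb: assumes "\<forall>e\<in>E. inD e" shows "T (\<lambda>k. \<Sum>e\<in>E. cf e *\<^sub>C e k) = (\<Sum>e\<in>E. cf e *\<^sub>C T e)"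
proof -
  have "T (\<lambda>k. \<Sum>e\<in>E. cf e *\<^sub>C e k) = (\<Sum>k\<in>I. \<Sum>e\<in>E. cf e *\<^sub>C A k (e k))"
    unfolding T_def
  proof (rule sum.cong[OF refl])
    fix k assume k: "k \<in> I"
    have eD: "\<forall>e\<in>E. e k \<in> D k" using assms k by (auto simp: inD_def)
    have "A k (\<Sum>e\<in>E. cf e *\<^sub>C e k) = (\<Sum>e\<in>E. A k (cf e *\<^sub>C e k))"
    proof (rule blin_sum[OF AD[OF k] Ds[OF k]])
      fix e assume "e \<in> E"
      thus "cf e *\<^sub>C e k \<in> D k" using eD by (intro csub_scaleC[OF Ds[OF k]]) blast
    qed
    also have "\<dots> = (\<Sum>e\<in>E. cf e *\<^sub>C A k (e k))"
      using blin_scaleC[OF AD[OF k]] eD by (intro sum.cong) auto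
    finally show "A k (\<Sum>e\<in>E. cf e *\<^sub>C e k) = (\<Sum>e\<in>E. cf e *\<^sub>C A k (e k))" .
  qed
  also have "\<dots> = (\<Sum>e\<in>E. \<Sum>k\<in>I. cf e *\<^sub>C A k (e k))" by (rule sum.swap)
  also have "\<dots> = (\<Sum>e\<in>E. cf e *\<^sub>C T e)"
    unfolding T_def by (simp add: scaleC_sum_right)
  finally show ?thesis .
qed

lemma T_scale: assumes "inD x" shows "T (\<lambda>k. a *\<^sub>C x k) = a *\<^sub>C T x"
proof -
  have "T (\<lambda>k. a *\<^sub>C x k) = (\<Sum>k\<in>I. a *\<^sub>C A k (x k))"
    unfolding T_def
  proof (rule sum.cong[OF refl])
    fix k assume k: "k \<in> I"
    hence "x k \<in> D k" using assms by (simp add: inD_def)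
    thus "A k (a *\<^sub>C x k) = a *\<^sub>C A k (x k)" by (rule blin_scaleC[OF AD[OF k]])
  qed
  thus ?thesis unfolding T_def by (simp add: scaleC_sum_right)
qed

lemma gs_step:
  assumes E: "finite E" "orthn E" "E \<subseteq> NN" and v: "v \<in> NN" "v \<notin> spanI E"
  shows "\<exists>e\<in>NN. ip e e = 1 \<and> (\<forall>e'\<in>E. ip e' e = 0)"
proof -
  define w where "w = (\<lambda>k. v k - (\<Sum>e\<in>E. ip e v *\<^sub>C e k))"
  have ED: "\<forall>e\<in>E. inD e" "\<forall>e\<in>E. T e = 0" using E(3) by (auto simp: NN_def)
  have vD: "inD v" "T v = 0" using v(1) by (auto simp: NN_def)
  have cD: "inD (\<lambda>k. \<Sum>e\<in>E. ip e v *\<^sub>C e k)" using inD_comb[OF ED(1)] .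
  have wD: "inD w" unfolding w_def using inD_diff[OF vD(1) cD] .
  have Tw: "T w = 0"
    unfolding w_def using T_diff[OF vD(1) cD] T_comb[OF ED(1)] ED(2) vD(2) by (simp add: scaleC_zero_right)
  have ipw: "ip e' w = 0" if e': "e' \<in> E" for e'
  proof -
    have "ip e' w = ip e' v - (\<Sum>e\<in>E. ip e v * ip e' e)"
      unfolding w_def by (simp add: ip_diff_right ip_comb_right)
    also have "(\<Sum>e\<in>E. ip e v * ip e' e) = ip e' v * ip e' e' + (\<Sum>e\<in>E - {e'}. ip e v * ip e' e)"
      using E(1) e' by (simp add: sum.remove)
    also have "(\<Sum>e\<in>E - {e'}. ip e v * ip e' e) = 0"
      using E(2) e' unfolding orthn_def by (intro sum.neutral) auto
    also have "ip e' e' = 1" using E(2) e' by (simp add: orthn_def)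
    finally show ?thesis by simp
  qed
  have nw: "nn w \<noteq> 0"
  proof
    assume "nn w = 0"
    hence "\<forall>k\<in>I. w k = 0" using nn_zero by blast
    hence "\<forall>k\<in>I. v k = (\<Sum>e\<in>E. ip e v *\<^sub>C e k)" by (simp add: w_def)
    hence "v \<in> spanI E" unfolding spanI_def by (intro CollectI exI[of _ "\<lambda>e. ip e v"])
    thus False using v(2) by simp
  qed
  hence nwp: "nn w > 0" using nn_ge0[of w] by simp
  define a where "a = complex_of_real (1 / sqrt (nn w))"
  define e where "e = (\<lambda>k. a *\<^sub>C w k)"
  have eD: "inD e" unfolding e_def using inD_scale[OF wD] .
  have Te: "T e = 0" unfolding e_def using T_scale[OF wD] Tw by (simp add: scaleC_zero_right)
  have "ip e e = cnj a * (a * ip w w)" unfolding e_def by (simp add: ip_scale_left ip_scale_right)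
  also have "\<dots> = 1" using nwp
    by (simp add: a_def ip_self power2_eq_square[symmetric] flip: of_real_mult of_real_power)
  finally have ee: "ip e e = 1" .
  have "\<forall>e'\<in>E. ip e' e = 0" unfolding e_def using ipw by (simp add: ip_scale_right)
  moreover have "e \<in> NN" using eD Te by (simp add: NN_def)
  ultimately show ?thesis using ee by blast
qed

end

context dsum begin

lemma comps_small:
  fixes y :: "nat \<Rightarrow> nat \<Rightarrow> 'a"
  assumes "\<forall>k\<in>I. Cauchy (\<lambda>m. y m k)" and e: "\<epsilon> > 0"
  shows "\<exists>N. \<forall>m\<ge>N. \<forall>p\<ge>N. \<forall>k\<in>I. norm (y m k - y p k) < \<epsilon>"
proof -
  have "\<forall>k\<in>I. \<exists>M. \<forall>m\<ge>M. \<forall>p\<ge>M. norm (y m k - y p k) < \<epsilon>"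
  proof
    fix k assume "k \<in> I"
    hence "Cauchy (\<lambda>m. y m k)" using assms by blast
    from metric_CauchyD[OF this e] show "\<exists>M. \<forall>m\<ge>M. \<forall>p\<ge>M. norm (y m k - y p k) < \<epsilon>"
      by (simp add: dist_norm)
  qed
  then obtain M where M: "\<And>k. k \<in> I \<Longrightarrow> \<forall>m\<ge>M k. \<forall>p\<ge>M k. norm (y m k - y p k) < \<epsilon>"
    by metis
  have le: "M k \<le> (\<Sum>k\<in>I. M k)" if "k \<in> I" for k using finI that by (intro member_le_sum) auto
  show ?thesis
  proof (intro exI allI impI ballI)
    fix m p k assume "(\<Sum>k\<in>I. M k) \<le> m" "(\<Sum>k\<in>I. M k) \<le> p" "k \<in> I"
    thus "norm (y m k - y p k) < \<epsilon>" using M[of k] le[of k] by auto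
  qed
qed

lemma NN_findim: "\<exists>E. finite E \<and> orthn E \<and> E \<subseteq> NN \<and> NN \<subseteq> spanI E"
proof (rule ccontr)
  assume neg: "\<not> ?thesis"
  define P where "P E e \<longleftrightarrow> e \<in> NN \<and> ip e e = 1 \<and> (\<forall>e'\<in>E. ip e' e = 0)" for E e
  have ext_ex: "\<exists>e. P E e" if "finite E" "orthn E" "E \<subseteq> NN" for E
  proof -
    have "\<not> NN \<subseteq> spanI E" using neg that by blast
    then obtain v where "v \<in> NN" "v \<notin> spanI E" by blast
    from gs_step[OF that this] show ?thesis by (auto simp: P_def)
  qed
  define ext where "ext E = (SOME e. P E e)" for E
  define S where "S = rec_nat {} (\<lambda>_ S. insert (ext S) S)"
  have S0: "S 0 = {}" and SS: "S (Suc m) = insert (ext (S m)) (S m)" for m by (simp_all add: S_def)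
  have inv: "finite (S m) \<and> orthn (S m) \<and> S m \<subseteq> NN" for m
  proof (induction m)
    case 0 then show ?case by (simp add: S0 orthn_def)
  next
    case (Suc m)
    hence "\<exists>e. P (S m) e" using ext_ex by blast
    hence Pe: "P (S m) (ext (S m))" unfolding ext_def by (rule someI_ex)
    define e where "e = ext (S m)"
    have e: "e \<in> NN" "ip e e = 1" "\<forall>e'\<in>S m. ip e' e = 0" using Pe by (auto simp: P_def e_def)
    have e2: "\<forall>e'\<in>S m. ip e e' = 0"
    proof
      fix e' assume "e' \<in> S m"
      hence "ip e' e = 0" using e(3) by blast
      moreover have "ip e e' = cnj (ip e' e)" by (rule ip_commute)
      ultimately show "ip e e' = 0" by simp
    qed
    have "orthn (insert e (S m))" using Suc.IH e e2 unfolding orthn_def by auto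
    thus ?case using Suc.IH e by (simp add: SS e_def[symmetric])
  qed
  define q where "q m = ext (S m)" for m
  have qP: "P (S m) (q m)" for m
  proof -
    have "\<exists>e. P (S m) e" using ext_ex inv[of m] by blast
    thus ?thesis unfolding q_def ext_def by (rule someI_ex)
  qed
  have mono: "q p \<in> S m" if "p < m" for p m
    using that
  proof (induction m)
    case 0 then show ?case by simp
  next
    case (Suc m)
    then show ?case by (cases "p = m") (auto simp: SS q_def)
  qed
  have orth: "ip (q m) (q p) = 0" if "m \<noteq> p" for m p
  proof (cases "m < p")
    case True
    thus ?thesis using qP[of p] mono[OF True] by (simp add: P_def)
  next
    case False
    hence "p < m" using that by simp
    hence "ip (q p) (q m) = 0" using qP[of m] mono[of p m] by (simp add: P_def)
    thus ?thesis using ip_commute[of "q m" "q p"] by simp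
  qed
  have qN: "inD (q m)" "T (q m) = 0" "nn (q m) = 1" for m
  proof -
    show "inD (q m)" "T (q m) = 0" using qP[of m] by (auto simp: P_def NN_def)
    have "complex_of_real (nn (q m)) = 1" using qP[of m] ip_self[of "q m"] by (simp add: P_def)
    thus "nn (q m) = 1" by (metis of_real_eq_1_iff)
  qed
  obtain r where r: "strict_mono r" "\<forall>k\<in>I. Cauchy (\<lambda>m. q (r m) k)"
    using seq_cauchy[of q] qN by (auto simp: convergent_const)
  define \<epsilon> where "\<epsilon> = 1 / (real (card I) + 1)"
  have e0: "\<epsilon> > 0" "\<epsilon> \<le> 1" by (auto simp: \<epsilon>_def)
  obtain N where N: "\<forall>m\<ge>N. \<forall>p\<ge>N. \<forall>k\<in>I. norm (q (r m) k - q (r p) k) < \<epsilon>"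
    using comps_small[OF r(2) e0(1)] by blast
  define d where "d = (\<lambda>k. q (r N) k - q (r (Suc N)) k)"
  have "r N \<noteq> r (Suc N)" using r(1) by (metis lessI less_irrefl strict_mono_def)
  hence "ip (q (r N)) (q (r (Suc N))) = 0" by (rule orth)
  hence "nn d = 2" unfolding d_def using nn_diff[of "q (r N)" "q (r (Suc N))"] qN(3) by simp
  moreover have "nn d \<le> real (card I) * \<epsilon>"
    unfolding nn_def
  proof (rule sum_bounded_above)
    fix k assume k: "k \<in> I"
    have "norm (d k) < \<epsilon>" using N k by (simp add: d_def)
    hence "(norm (d k))\<^sup>2 \<le> \<epsilon>\<^sup>2" by (intro power_mono) auto
    also have "\<dots> \<le> \<epsilon>" using e0 by (simp add: power2_eq_square mult_le_cancel_left1)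
    finally show "(norm (d k))\<^sup>2 \<le> \<epsilon>" .
  qed
  moreover have "real (card I) * \<epsilon> < 1" by (simp add: \<epsilon>_def)
  ultimately show False by simp
qed

end

context dsum begin

lemma limit_comps:
  assumes C: "\<forall>k\<in>I. Cauchy (\<lambda>m. y m k)" and yD: "\<And>m. inD (y m)"
  shows "\<exists>L. inD L \<and> (\<forall>k\<in>I. (\<lambda>m. y m k) \<longlonglongrightarrow> L k)"
proof -
  define L where "L k = lim (\<lambda>m. y m k)" for k
  have t: "(\<lambda>m. y m k) \<longlonglongrightarrow> L k" if "k \<in> I" for k
  proof -
    have "Cauchy (\<lambda>m. y m k)" using C that by blast
    hence "convergent (\<lambda>m. y m k)" by (simp only: Cauchy_convergent_iff)
    thus ?thesis by (simp add: L_def convergent_LIMSEQ_iff)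
  qed
  have "L k \<in> D k" if k: "k \<in> I" for k
  proof -
    have yk: "\<And>m. y m k \<in> D k" using yD k by (simp add: inD_def)
    show ?thesis by (rule closed_sequentially[OF ccsub_closed[OF Dcc[OF k]] yk t[OF k]])
  qed
  hence "inD L" by (simp add: inD_def)
  thus ?thesis using t by blast
qed

lemma T_tendsto:
  assumes yD: "\<And>m. inD (y m)" and LD: "inD L" and t: "\<forall>k\<in>I. (\<lambda>m. y m k) \<longlonglongrightarrow> L k"
  shows "(\<lambda>m. T (y m)) \<longlonglongrightarrow> T L"
  unfolding T_def
proof (rule tendsto_sum)
  fix k assume k: "k \<in> I"
  have a: "\<forall>m. y m k \<in> D k" using yD k by (simp add: inD_def)
  have b: "L k \<in> D k" using LD k by (simp add: inD_def)
  have c: "(\<lambda>m. y m k) \<longlonglongrightarrow> L k" using t k by blast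
  show "(\<lambda>m. A k (y m k)) \<longlonglongrightarrow> A k (L k)"
    using blin_cont[OF AD[OF k] Ds[OF k] a b c] .
qed

lemma ip_tendsto:
  assumes t: "\<forall>k\<in>I. (\<lambda>m. y m k) \<longlonglongrightarrow> L k"
  shows "(\<lambda>m. ip e (y m)) \<longlonglongrightarrow> ip e L"
  unfolding ip_def
proof (rule tendsto_sum)
  fix k assume "k \<in> I"
  hence "(\<lambda>m. y m k) \<longlonglongrightarrow> L k" using t by blast
  thus "(\<lambda>m. cinner (e k) (y m k)) \<longlonglongrightarrow> cinner (e k) (L k)" by (rule cinner_tendsto_right)
qed

lemma nn_tendsto:
  assumes t: "\<forall>k\<in>I. (\<lambda>m. y m k) \<longlonglongrightarrow> L k"
  shows "(\<lambda>m. nn (y m)) \<longlonglongrightarrow> nn L"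
  unfolding nn_def
proof (rule tendsto_sum)
  fix k assume "k \<in> I"
  hence "(\<lambda>m. y m k) \<longlonglongrightarrow> L k" using t by blast
  thus "(\<lambda>m. (norm (y m k))\<^sup>2) \<longlonglongrightarrow> (norm (L k))\<^sup>2" by (intro tendsto_power tendsto_norm)
qed

lemma normalize:
  assumes xD: "inD x" and np: "nn x > 0"
  shows "\<exists>a. inD (\<lambda>k. a *\<^sub>C x k) \<and> nn (\<lambda>k. a *\<^sub>C x k) = 1 \<and>
     (norm (T (\<lambda>k. a *\<^sub>C x k)))\<^sup>2 = (norm (T x))\<^sup>2 / nn x \<and> (\<forall>e. ip e (\<lambda>k. a *\<^sub>C x k) = a * ip e x)"
proof -
  define a where "a = complex_of_real (1 / sqrt (nn x))"
  have "ip (\<lambda>k. a *\<^sub>C x k) (\<lambda>k. a *\<^sub>C x k) = cnj a * (a * ip x x)" by (simp add: ip_scale_left ip_scale_right)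
  also have "\<dots> = 1" using np
    by (simp add: a_def ip_self power2_eq_square[symmetric] flip: of_real_mult of_real_power)
  finally have "complex_of_real (nn (\<lambda>k. a *\<^sub>C x k)) = 1" by (simp add: ip_self)
  hence n1: "nn (\<lambda>k. a *\<^sub>C x k) = 1" by (metis of_real_eq_1_iff)
  have "T (\<lambda>k. a *\<^sub>C x k) = a *\<^sub>C T x" by (rule T_scale[OF xD])
  hence "(norm (T (\<lambda>k. a *\<^sub>C x k)))\<^sup>2 = (cmod a * norm (T x))\<^sup>2" by (simp add: norm_scaleC)
  also have "\<dots> = (norm (T x))\<^sup>2 / nn x"
  proof -
    have ca: "cmod a = 1 / sqrt (nn x)" unfolding a_def norm_of_real using np by simp
    have "(1 / sqrt (nn x) * norm (T x))\<^sup>2 = (norm (T x))\<^sup>2 / nn x" using np by (simp add: power_divide power_mult_distrib)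
    thus ?thesis unfolding ca .
  qed
  finally have t: "(norm (T (\<lambda>k. a *\<^sub>C x k)))\<^sup>2 = (norm (T x))\<^sup>2 / nn x" .
  show ?thesis using inD_scale[OF xD] n1 t ip_scale_right by blast
qed

lemma delta_bound:
  assumes E: "finite E" "E \<subseteq> NN" "NN \<subseteq> spanI E"
  shows "\<exists>\<delta>>0. \<forall>x. inD x \<and> (\<forall>e\<in>E. ip e x = 0) \<longrightarrow> \<delta> * nn x \<le> (norm (T x))\<^sup>2"
proof (rule ccontr)
  assume neg: "\<not> ?thesis"
  have "\<forall>m. \<exists>y. inD y \<and> (\<forall>e\<in>E. ip e y = 0) \<and> nn y = 1 \<and> (norm (T y))\<^sup>2 < 1 / real (Suc m)"
  proof
    fix m
    have pos: "1 / real (Suc m) > 0" by simp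
    have "\<forall>\<delta>>0. \<exists>x. inD x \<and> (\<forall>e\<in>E. ip e x = 0) \<and> (norm (T x))\<^sup>2 < \<delta> * nn x"
      using neg by (auto simp: not_le)
    then obtain x where x: "inD x" "\<forall>e\<in>E. ip e x = 0" "(norm (T x))\<^sup>2 < 1 / real (Suc m) * nn x"
      using pos by blast
    have np: "nn x > 0"
    proof (rule ccontr)
      assume "\<not> nn x > 0"
      hence "nn x = 0" using nn_ge0[of x] by simp
      thus False using x(3) by simp
    qed
    obtain a where a: "inD (\<lambda>k. a *\<^sub>C x k)" "nn (\<lambda>k. a *\<^sub>C x k) = 1"
      "(norm (T (\<lambda>k. a *\<^sub>C x k)))\<^sup>2 = (norm (T x))\<^sup>2 / nn x" "\<forall>e. ip e (\<lambda>k. a *\<^sub>C x k) = a * ip e x"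
      using normalize[OF x(1) np] by blast
    have "(norm (T x))\<^sup>2 / nn x < 1 / real (Suc m)" using x(3) np by (simp add: divide_less_eq)
    thus "\<exists>y. inD y \<and> (\<forall>e\<in>E. ip e y = 0) \<and> nn y = 1 \<and> (norm (T y))\<^sup>2 < 1 / real (Suc m)"
      using a x(2) by (intro exI[of _ "\<lambda>k. a *\<^sub>C x k"]) simp
  qed
  then obtain Y where Y: "\<And>m. inD (Y m)" "\<And>m. \<forall>e\<in>E. ip e (Y m) = 0" "\<And>m. nn (Y m) = 1"
    "\<And>m. (norm (T (Y m)))\<^sup>2 < 1 / real (Suc m)" by metis
  have T0: "(\<lambda>m. T (Y m)) \<longlonglongrightarrow> 0"
  proof -
    have "(\<lambda>m. (norm (T (Y m)))\<^sup>2) \<longlonglongrightarrow> 0"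
    proof (rule tendsto0_squeeze)
      show "\<forall>m. 0 \<le> (norm (T (Y m)))\<^sup>2" by simp
      show "\<forall>m. (norm (T (Y m)))\<^sup>2 \<le> 1 / real (Suc m)" using Y(4) less_imp_le by blast
      show "(\<lambda>m. 1 / real (Suc m)) \<longlonglongrightarrow> 0" using LIMSEQ_inverse_real_of_nat by (simp add: inverse_eq_divide)
    qed
    hence "(\<lambda>m. sqrt ((norm (T (Y m)))\<^sup>2)) \<longlonglongrightarrow> sqrt 0" by (rule tendsto_real_sqrt)
    hence "(\<lambda>m. norm (T (Y m))) \<longlonglongrightarrow> 0" by simp
    thus ?thesis by (rule tendsto_norm_zero_cancel)
  qed
  obtain r where r: "strict_mono r" "\<forall>k\<in>I. Cauchy (\<lambda>m. Y (r m) k)"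
    using seq_cauchy[of Y] Y(1,3) T0 convergent_def by fastforce
  obtain L where L: "inD L" "\<forall>k\<in>I. (\<lambda>m. Y (r m) k) \<longlonglongrightarrow> L k"
    using limit_comps[OF r(2)] Y(1) by blast
  have "(\<lambda>m. T (Y (r m))) \<longlonglongrightarrow> T L" using T_tendsto[OF _ L(1) L(2)] Y(1) by blast
  moreover have "(\<lambda>m. T (Y (r m))) \<longlonglongrightarrow> 0" using LIMSEQ_subseq_LIMSEQ[OF T0 r(1)] by (simp add: o_def)
  ultimately have TL: "T L = 0" using LIMSEQ_unique by blast
  hence "L \<in> NN" using L(1) by (simp add: NN_def)
  hence "L \<in> spanI E" using E(3) by blast
  then obtain cf where cf: "\<forall>k\<in>I. L k = (\<Sum>e\<in>E. cf e *\<^sub>C e k)" by (auto simp: spanI_def)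
  have ipL: "ip e L = 0" if "e \<in> E" for e
  proof -
    have "(\<lambda>m. ip e (Y (r m))) \<longlonglongrightarrow> ip e L" using ip_tendsto[OF L(2)] .
    moreover have "(\<lambda>m. ip e (Y (r m))) = (\<lambda>m. 0)" using Y(2) that by simp
    ultimately show ?thesis using LIMSEQ_const_iff by metis
  qed
  have nL: "nn L = 1"
  proof -
    have "(\<lambda>m. nn (Y (r m))) \<longlonglongrightarrow> nn L" using nn_tendsto[OF L(2)] .
    moreover have "(\<lambda>m. nn (Y (r m))) = (\<lambda>m. 1)" using Y(3) by simp
    ultimately show ?thesis using LIMSEQ_const_iff by metis
  qed
  have "ip L L = ip (\<lambda>k. \<Sum>e\<in>E. cf e *\<^sub>C e k) L" using cf by (rule ip_cong_left)
  also have "\<dots> = (\<Sum>e\<in>E. cnj (cf e) * ip e L)" by (rule ip_comb_left)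
  also have "\<dots> = 0" using ipL by simp
  finally have "complex_of_real (nn L) = 0" by (simp add: ip_self)
  thus False using nL by simp
qed

end

context dsum begin

lemma proj_perp:
  assumes E: "finite E" "orthn E" and e': "e' \<in> E"
  shows "ip e' (\<lambda>k. w k - (\<Sum>e\<in>E. ip e w *\<^sub>C e k)) = 0"
proof -
  have "ip e' (\<lambda>k. w k - (\<Sum>e\<in>E. ip e w *\<^sub>C e k)) = ip e' w - (\<Sum>e\<in>E. ip e w * ip e' e)"
    by (simp add: ip_diff_right ip_comb_right)
  also have "(\<Sum>e\<in>E. ip e w * ip e' e) = ip e' w * ip e' e' + (\<Sum>e\<in>E - {e'}. ip e w * ip e' e)"
    using E(1) e' by (simp add: sum.remove)
  also have "(\<Sum>e\<in>E - {e'}. ip e w * ip e' e) = 0"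
    using E(2) e' unfolding orthn_def by (intro sum.neutral) auto
  also have "ip e' e' = 1" using E(2) e' by (simp add: orthn_def)
  finally show ?thesis by simp
qed

lemma closed_range: "closed {(\<Sum>k\<in>I. A k (x k)) | x. \<forall>k\<in>I. x k \<in> X k}"
proof -
  obtain E where E: "finite E" "orthn E" "E \<subseteq> NN" "NN \<subseteq> spanI E" using NN_findim by blast
  obtain \<delta> where \<delta>: "\<delta> > 0" "\<And>x. inD x \<Longrightarrow> \<forall>e\<in>E. ip e x = 0 \<Longrightarrow> \<delta> * nn x \<le> (norm (T x))\<^sup>2"
    using delta_bound[OF E(1) E(3) E(4)] by blast
  have ED: "\<forall>e\<in>E. inD e" "\<forall>e\<in>E. T e = 0" using E(3) by (auto simp: NN_def)
  show ?thesis unfolding closed_sequential_limits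
  proof (intro allI impI, elim conjE)
    fix ys y assume ys: "\<forall>m. ys m \<in> {(\<Sum>k\<in>I. A k (x k)) | x. \<forall>k\<in>I. x k \<in> X k}" and y: "ys \<longlonglongrightarrow> y"
    have "\<forall>m. \<exists>u. ys m = (\<Sum>k\<in>I. A k (u k)) \<and> (\<forall>k\<in>I. u k \<in> X k)" using ys by blast
    then obtain U where U: "\<And>m. ys m = (\<Sum>k\<in>I. A k (U m k))" "\<And>m k. k \<in> I \<Longrightarrow> U m k \<in> X k"
      by metis
    have "\<forall>p. \<exists>d. snd p \<in> I \<longrightarrow> d \<in> D (snd p) \<and> A (snd p) d = A (snd p) (U (fst p) (snd p))"
    proof
      fix p :: "nat \<times> nat"
      show "\<exists>d. snd p \<in> I \<longrightarrow> d \<in> D (snd p) \<and> A (snd p) d = A (snd p) (U (fst p) (snd p))"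
      proof (cases "snd p \<in> I")
        case True
        then show ?thesis using decomp_D[OF Xcc[OF True] Ab[OF True] U(2)[OF True]] by (auto simp: D_def)
      qed auto
    qed
    then obtain f where f: "\<And>p. snd p \<in> I \<Longrightarrow> f p \<in> D (snd p) \<and> A (snd p) (f p) = A (snd p) (U (fst p) (snd p))"
      by metis
    define W where "W m k = f (m, k)" for m k
    have WD: "inD (W m)" for m using f by (auto simp: inD_def W_def)
    have TW: "T (W m) = ys m" for m unfolding T_def U(1) using f by (intro sum.cong) (auto simp: W_def)
    define Z where "Z m = (\<lambda>k. W m k - (\<Sum>e\<in>E. ip e (W m) *\<^sub>C e k))" for m
    have ZD: "inD (Z m)" for m unfolding Z_def using inD_diff[OF WD inD_comb[OF ED(1)]] .
    have TZ: "T (Z m) = ys m" for m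
      unfolding Z_def using T_diff[OF WD inD_comb[OF ED(1)]] T_comb[OF ED(1)] ED(2) TW
      by (simp add: scaleC_zero_right)
    have ZE: "\<forall>e\<in>E. ip e (Z m) = 0" for m unfolding Z_def using proj_perp[OF E(1,2)] by blast
    define F where "F = (sequentially \<times>\<^sub>F sequentially :: (nat \<times> nat) filter)"
    have ysc: "((\<lambda>mp. ys (fst mp) - ys (snd mp)) \<longlongrightarrow> 0) F"
      unfolding F_def by (rule conv_prod0) (use y convergent_def in blast)
    have C: "\<forall>k\<in>I. Cauchy (\<lambda>m. Z m k)"
    proof
      fix k assume k: "k \<in> I"
      show "Cauchy (\<lambda>m. Z m k)"
      proof (rule cauchy_prod)
        define d where "d mp = (\<lambda>k. Z (fst mp) k - Z (snd mp) k)" for mp :: "nat \<times> nat"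
        have bnd: "(norm (d mp k))\<^sup>2 \<le> (norm (ys (fst mp) - ys (snd mp)))\<^sup>2 / \<delta>" for mp
        proof -
          have dD: "inD (d mp)" unfolding d_def by (rule inD_diff[OF ZD ZD])
          have dE: "\<forall>e\<in>E. ip e (d mp) = 0" unfolding d_def using ZE by (simp add: ip_diff_right)
          have Td: "T (d mp) = ys (fst mp) - ys (snd mp)" unfolding d_def using T_diff[OF ZD ZD] TZ by simp
          have "\<delta> * nn (d mp) \<le> (norm (ys (fst mp) - ys (snd mp)))\<^sup>2" using \<delta>(2)[OF dD dE] Td by simp
          moreover have "(norm (d mp k))\<^sup>2 \<le> nn (d mp)" by (rule comp_le_nn[OF k])
          ultimately show ?thesis using \<delta>(1) by (simp add: le_divide_eq mult.commute order_trans[OF mult_left_mono])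
        qed
        have sq: "((\<lambda>mp. (norm (d mp k))\<^sup>2) \<longlongrightarrow> 0) F"
        proof (rule tendsto0_squeeze)
          show "\<forall>mp. 0 \<le> (norm (d mp k))\<^sup>2" by simp
          show "\<forall>mp. (norm (d mp k))\<^sup>2 \<le> (norm (ys (fst mp) - ys (snd mp)))\<^sup>2 / \<delta>" using bnd by blast
          have "((\<lambda>mp. (norm (ys (fst mp) - ys (snd mp)))\<^sup>2 / \<delta>) \<longlongrightarrow> (norm (0::'b))\<^sup>2 / \<delta>) F"
            by (intro tendsto_divide tendsto_power tendsto_norm ysc tendsto_const) (use \<delta> in simp)
          thus "((\<lambda>mp. (norm (ys (fst mp) - ys (snd mp)))\<^sup>2 / \<delta>) \<longlongrightarrow> 0) F" by simp
        qed
        have "((\<lambda>mp. sqrt ((norm (d mp k))\<^sup>2)) \<longlongrightarrow> sqrt 0) F" by (rule tendsto_real_sqrt[OF sq])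
        thus "((\<lambda>mp. norm (Z (fst mp) k - Z (snd mp) k)) \<longlongrightarrow> 0) (sequentially \<times>\<^sub>F sequentially)"
          by (simp add: d_def F_def)
      qed
    qed
    obtain L where L: "inD L" "\<forall>k\<in>I. (\<lambda>m. Z m k) \<longlonglongrightarrow> L k" using limit_comps[OF C ZD] by blast
    have "(\<lambda>m. T (Z m)) \<longlonglongrightarrow> T L" by (rule T_tendsto[OF ZD L(1) L(2)])
    hence "ys \<longlonglongrightarrow> T L" using TZ by simp
    hence yT: "y = T L" using y LIMSEQ_unique by blast
    have "\<forall>k\<in>I. L k \<in> X k" using L(1) DX by (auto simp: inD_def)
    thus "y \<in> {(\<Sum>k\<in>I. A k (x k)) | x. \<forall>k\<in>I. x k \<in> X k}" using yT unfolding T_def by blast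
  qed
qed

lemma indep:
  assumes i: "i \<in> I"
  shows "finite_dim (A i ` X i \<inter> {(\<Sum>j\<in>I-{i}. y j) | y. \<forall>j\<in>I-{i}. y j \<in> A j ` X j})"
proof -
  obtain E where E: "finite E" "orthn E" "E \<subseteq> NN" "NN \<subseteq> spanI E" using NN_findim by blast
  have ED: "\<forall>e\<in>E. inD e" using E(3) by (auto simp: NN_def)
  define F where "F = (\<lambda>e. A i (e i)) ` E"
  have "A i ` X i \<inter> {(\<Sum>j\<in>I-{i}. y j) | y. \<forall>j\<in>I-{i}. y j \<in> A j ` X j} \<subseteq> cspan_fin F"
  proof
    fix v assume v: "v \<in> A i ` X i \<inter> {(\<Sum>j\<in>I-{i}. y j) | y. \<forall>j\<in>I-{i}. y j \<in> A j ` X j}"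
    obtain u where u: "u \<in> X i" "v = A i u" using v by blast
    obtain y where y: "v = (\<Sum>j\<in>I-{i}. y j)" "\<forall>j\<in>I-{i}. y j \<in> A j ` X j" using v by blast
    have "\<forall>j. \<exists>d. j \<in> I \<longrightarrow> d \<in> D j \<and> A j d = (if j = i then v else y j)"
    proof
      fix j
      show "\<exists>d. j \<in> I \<longrightarrow> d \<in> D j \<and> A j d = (if j = i then v else y j)"
      proof (cases "j \<in> I")
        case True
        show ?thesis
        proof (cases "j = i")
          case True
          then show ?thesis using decomp_D[OF Xcc[OF i] Ab[OF i] u(1)] u(2) by (auto simp: D_def)
        next
          case False
          then obtain w where w: "w \<in> X j" "y j = A j w" using y(2) \<open>j \<in> I\<close> by blast
          then show ?thesis using decomp_D[OF Xcc[OF \<open>j \<in> I\<close>] Ab[OF \<open>j \<in> I\<close>] w(1)] False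
            by (auto simp: D_def)
        qed
      qed auto
    qed
    then obtain Dd where Dd: "\<And>j. j \<in> I \<Longrightarrow> Dd j \<in> D j \<and> A j (Dd j) = (if j = i then v else y j)"
      by metis
    define x where "x = (\<lambda>j. if j = i then Dd i else - Dd j)"
    have xD: "inD x" unfolding inD_def x_def using Dd csub_minus[OF Ds] by auto
    have "T x = A i (x i) + (\<Sum>j\<in>I-{i}. A j (x j))"
      unfolding T_def using finI i by (simp add: sum.remove)
    also have "A i (x i) = v" using Dd[OF i] by (simp add: x_def)
    also have "(\<Sum>j\<in>I-{i}. A j (x j)) = (\<Sum>j\<in>I-{i}. - y j)"
    proof (rule sum.cong[OF refl])
      fix j assume j: "j \<in> I - {i}"
      hence "A j (- Dd j) = - A j (Dd j)" using blin_minus[OF AD] Dd by blast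
      thus "A j (x j) = - y j" using Dd j by (simp add: x_def)
    qed
    also have "\<dots> = - v" using y(1) by (simp add: sum_negf)
    finally have "T x = 0" by simp
    hence "x \<in> NN" using xD by (simp add: NN_def)
    hence "x \<in> spanI E" using E(4) by blast
    then obtain cf where cf: "\<forall>k\<in>I. x k = (\<Sum>e\<in>E. cf e *\<^sub>C e k)" by (auto simp: spanI_def)
    have eiD: "\<forall>e\<in>E. e i \<in> D i" using ED i by (simp add: inD_def)
    have "v = A i (x i)" using Dd[OF i] by (simp add: x_def)
    also have "\<dots> = A i (\<Sum>e\<in>E. cf e *\<^sub>C e i)" using cf i by simp
    also have "\<dots> = (\<Sum>e\<in>E. A i (cf e *\<^sub>C e i))"
    proof (rule blin_sum[OF AD[OF i] Ds[OF i]])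
      fix e assume "e \<in> E"
      thus "cf e *\<^sub>C e i \<in> D i" using eiD by (intro csub_scaleC[OF Ds[OF i]]) blast
    qed
    also have "\<dots> = (\<Sum>e\<in>E. cf e *\<^sub>C A i (e i))"
    proof (rule sum.cong[OF refl])
      fix e assume "e \<in> E"
      hence "e i \<in> D i" using eiD by blast
      thus "A i (cf e *\<^sub>C e i) = cf e *\<^sub>C A i (e i)" by (rule blin_scaleC[OF AD[OF i]])
    qed
    also have "\<dots> \<in> cspan_fin F"
    proof (rule cspan_sum)
      show "\<forall>e\<in>E. A i (e i) \<in> cspan_fin F"
        using E(1) by (auto simp: F_def intro!: cspan_base)
    qed
    finally show "v \<in> cspan_fin F" .
  qed
  moreover have "finite F" using E(1) by (simp add: F_def)
  ultimately show ?thesis unfolding finite_dim_def by blast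
qed

end

lemma blin_restrict:
  assumes "bounded_clinear_on X Y T" "S \<subseteq> X" shows "bounded_clinear_on S UNIV T"
proof -
  obtain K where "\<forall>x\<in>X. \<forall>y\<in>X. T (x + y) = T x + T y"
    "\<forall>c. \<forall>x\<in>X. T (c *\<^sub>C x) = c *\<^sub>C T x" "\<forall>x\<in>X. norm (T x) \<le> norm x * K"
    using assms(1) unfolding bounded_clinear_on_def by blast
  thus ?thesis using assms(2) unfolding bounded_clinear_on_def by (auto simp: subset_eq intro: exI[of _ K])
qed

lemma cptseq_mono: "cptseq X K \<Longrightarrow> S \<subseteq> X \<Longrightarrow> cptseq S K"
  unfolding cptseq_def by (meson subsetD)

lemma sq_bound:
  fixes \<gamma> g \<eta> :: real
  assumes "\<gamma> > 0" "\<eta> > 0" "g \<ge> 0" "g > \<gamma> - \<eta> / (2 * \<gamma>)"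
  shows "g\<^sup>2 \<ge> \<gamma>\<^sup>2 - \<eta>"
proof (cases "\<gamma> - \<eta> / (2 * \<gamma>) \<ge> 0")
  case True
  have "(\<gamma> - \<eta> / (2 * \<gamma>))\<^sup>2 \<le> g\<^sup>2" using True assms by (intro power_mono) auto
  moreover have "(\<gamma> - \<eta> / (2 * \<gamma>))\<^sup>2 = \<gamma>\<^sup>2 - \<eta> + (\<eta> / (2 * \<gamma>))\<^sup>2"
    using assms(1) by (simp add: power2_diff power2_eq_square field_simps)
  moreover have "(\<eta> / (2 * \<gamma>))\<^sup>2 \<ge> 0" by simp
  ultimately show ?thesis by linarith
next
  case False
  hence "\<gamma> < \<eta> / (2 * \<gamma>)" by simp
  hence "\<gamma> * (2 * \<gamma>) < \<eta>" using assms(1) by (simp add: less_divide_eq)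
  moreover have "\<gamma> * \<gamma> \<le> \<gamma> * (2 * \<gamma>)" using assms(1) by (intro mult_left_mono) auto
  ultimately have "\<gamma>\<^sup>2 < \<eta>" unfolding power2_eq_square by linarith
  thus ?thesis using zero_le_power2[of g] by linarith
qed

lemma quad_bound:
  fixes Q M :: "nat \<Rightarrow> nat \<Rightarrow> real" and t :: "nat \<Rightarrow> real"
  assumes fin: "finite I" and c0: "c0 > 0"
    and coer: "\<forall>v. c0 * (\<Sum>i\<in>I. (v i)\<^sup>2) \<le> (\<Sum>i\<in>I. \<Sum>j\<in>I. v i * Q i j * v j)"
    and \<eta>: "\<eta> = c0 / (2 * (real (card I) + 1))"
    and M: "\<forall>i\<in>I. \<forall>j\<in>I. M i j \<ge> Q i j - \<eta>"
    and t: "\<forall>i\<in>I. t i \<ge> 0"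
  shows "(c0 / 2) * (\<Sum>i\<in>I. (t i)\<^sup>2) \<le> (\<Sum>i\<in>I. \<Sum>j\<in>I. M i j * t i * t j)"
proof -
  define S where "S = (\<Sum>i\<in>I. (t i)\<^sup>2)"
  have S0: "S \<ge> 0" by (simp add: S_def sum_nonneg)
  have e0: "\<eta> > 0" using c0 by (simp add: \<eta> add_pos_nonneg)
  have "(\<Sum>i\<in>I. \<Sum>j\<in>I. t i * Q i j * t j) - \<eta> * (\<Sum>i\<in>I. \<Sum>j\<in>I. t i * t j)
      = (\<Sum>i\<in>I. \<Sum>j\<in>I. (Q i j - \<eta>) * t i * t j)"
    by (simp add: sum_distrib_left sum_subtractf[symmetric] algebra_simps)
  also have "\<dots> \<le> (\<Sum>i\<in>I. \<Sum>j\<in>I. M i j * t i * t j)"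
  proof (intro sum_mono)
    fix i j assume ij: "i \<in> I" "j \<in> I"
    have "t i * t j \<ge> 0" using t ij by simp
    thus "(Q i j - \<eta>) * t i * t j \<le> M i j * t i * t j"
      using M ij mult_right_mono[of "Q i j - \<eta>" "M i j" "t i * t j"] by (simp add: mult.assoc)
  qed
  finally have A1: "(\<Sum>i\<in>I. \<Sum>j\<in>I. t i * Q i j * t j) - \<eta> * (\<Sum>i\<in>I. \<Sum>j\<in>I. t i * t j)
      \<le> (\<Sum>i\<in>I. \<Sum>j\<in>I. M i j * t i * t j)" .
  have "(\<Sum>i\<in>I. \<Sum>j\<in>I. t i * t j) \<le> (\<Sum>i\<in>I. \<Sum>j\<in>I. ((t i)\<^sup>2 + (t j)\<^sup>2) / 2)"
  proof (intro sum_mono)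
    fix i j
    have "0 \<le> (t i - t j)\<^sup>2" by simp
    thus "t i * t j \<le> ((t i)\<^sup>2 + (t j)\<^sup>2) / 2" by (simp add: power2_diff)
  qed
  also have "\<dots> = real (card I) * S"
  proof -
    have "(\<Sum>i\<in>I. \<Sum>j\<in>I. ((t i)\<^sup>2 + (t j)\<^sup>2) / 2) =
        (\<Sum>i\<in>I. \<Sum>j\<in>I. (t i)\<^sup>2 / 2) + (\<Sum>i\<in>I. \<Sum>j\<in>I. (t j)\<^sup>2 / 2)"
      by (simp add: add_divide_distrib sum.distrib)
    also have "(\<Sum>i\<in>I. \<Sum>j\<in>I. (t i)\<^sup>2 / 2) = real (card I) * S / 2"
      by (simp add: S_def sum_divide_distrib[symmetric] sum_distrib_left mult.commute)
    also have "(\<Sum>i\<in>I. \<Sum>j\<in>I. (t j)\<^sup>2 / 2) = real (card I) * S / 2"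
      by (simp add: S_def sum_divide_distrib[symmetric])
    finally show ?thesis by simp
  qed
  finally have A2: "(\<Sum>i\<in>I. \<Sum>j\<in>I. t i * t j) \<le> real (card I) * S" .
  have A3: "\<eta> * (real (card I) * S) \<le> c0 / 2 * S"
  proof -
    have "\<eta> * real (card I) \<le> c0 / 2"
      using c0 by (simp add: \<eta> field_simps)
    thus ?thesis using S0 by (metis mult.assoc mult_right_mono)
  qed
  have "c0 * S \<le> (\<Sum>i\<in>I. \<Sum>j\<in>I. t i * Q i j * t j)" using coer by (simp add: S_def)
  moreover have "\<eta> * (\<Sum>i\<in>I. \<Sum>j\<in>I. t i * t j) \<le> \<eta> * (real (card I) * S)"
    using A2 e0 by (intro mult_left_mono) auto
  ultimately show ?thesis using A1 A3 by (simp add: S_def[symmetric])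
qed

lemma norm_sum_sq:
  fixes v :: "nat \<Rightarrow> 'b::complex_inner"
  shows "(norm (\<Sum>k\<in>I. v k))\<^sup>2 = (\<Sum>i\<in>I. \<Sum>j\<in>I. Re (cinner (v i) (v j)))"
proof -
  have "(norm (\<Sum>k\<in>I. v k))\<^sup>2 = (\<Sum>j\<in>I. \<Sum>i\<in>I. Re (cinner (v i) (v j)))"
    by (simp add: norm_sq_Re cinner_sum_left cinner_sum_right Re_sum)
  also have "\<dots> = (\<Sum>i\<in>I. \<Sum>j\<in>I. Re (cinner (v i) (v j)))" by (rule sum.swap)
  finally show ?thesis .
qed

theorem mainTheorem1:
  fixes n :: nat
    and Hs :: "nat \<Rightarrow> 'a::chilbert_space set"
    and A :: "nat \<Rightarrow> 'a \<Rightarrow> 'b::chilbert_space"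
    and \<gamma> :: "nat \<Rightarrow> real"
    and \<epsilon> :: "nat \<Rightarrow> nat \<Rightarrow> real"
  assumes n_ge: "n \<ge> 1"
    and Hs: "\<forall>k\<in>{1..n}. closed_csubspace (Hs k)"
    and A_bdd: "\<forall>k\<in>{1..n}. bounded_clinear_on (Hs k) UNIV (A k)"
    and A_closed_ran: "\<forall>k\<in>{1..n}. closed (A k ` Hs k)"
    and \<gamma>_pos: "\<forall>k\<in>{1..n}. \<gamma> k > 0"
    and \<epsilon>_sym: "\<forall>i\<in>{1..n}. \<forall>j\<in>{1..n}. i \<noteq> j \<longrightarrow> \<epsilon> i j = \<epsilon> j i"
    and cond1: "\<forall>k\<in>{1..n}. ess_red_min_mod (Hs k) (A k) \<ge> ereal (\<gamma> k)"
    and cond2: "\<forall>i\<in>{1..n}. \<forall>j\<in>{1..n}. i \<noteq> j \<longrightarrow>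
                  ess_norm (Hs j) (Hs i) (\<lambda>x. adj_on (Hs i) (A i) (A j x)) \<le> \<epsilon> i j"
    and posdef: "pos_def_mat n (\<lambda>i j. if i = j then (\<gamma> i)\<^sup>2 else - \<epsilon> i j)"
  shows "ess_lin_indep n (\<lambda>k. A k ` Hs k)
         \<and> closed {(\<Sum>k\<in>{1..n}. A k (x k)) | x. \<forall>k\<in>{1..n}. x k \<in> Hs k}"
proof -
  define I where "I = {1..n}"
  have finI: "finite I" by (simp add: I_def)
  have Xcc: "closed_csubspace (Hs k)" if "k \<in> I" for k using Hs that by (simp add: I_def)
  have Ab: "bounded_clinear_on (Hs k) UNIV (A k)" if "k \<in> I" for k using A_bdd that by (simp add: I_def)
  have gp: "\<gamma> k > 0" if "k \<in> I" for k using \<gamma>_pos that by (simp add: I_def)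
  define DD where "DD k = orth_diff (Hs k) (ker_on (Hs k) (A k))" for k
  have DDX: "DD k \<subseteq> Hs k" if "k \<in> I" for k using orth_ccsub(2)[OF Xcc[OF that]] by (simp add: DD_def)
  define Q where "Q i j = (if i = j then (\<gamma> i)\<^sup>2 else - \<epsilon> i j)" for i j
  have pd: "\<forall>v. (\<exists>i\<in>I. v i \<noteq> 0) \<longrightarrow> (\<Sum>i\<in>I. \<Sum>j\<in>I. v i * Q i j * v j) > 0"
    using posdef by (simp add: pos_def_mat_def I_def Q_def)
  obtain c0 where c0: "c0 > 0" "\<forall>v. c0 * (\<Sum>i\<in>I. (v i)\<^sup>2) \<le> (\<Sum>i\<in>I. \<Sum>j\<in>I. v i * Q i j * v j)"
    using posdef_coercive[OF finI pd] by blast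
  define \<eta> where "\<eta> = c0 / (2 * (real (card I) + 1))"
  have \<eta>0: "\<eta> > 0" using c0(1) by (simp add: \<eta>_def add_pos_nonneg)
  have ex1: "\<forall>k\<in>I. \<exists>p. fst p \<ge> 0 \<and> fst p > \<gamma> k - \<eta> / (2 * \<gamma> k) \<and> bounded_clinear_on (DD k) (DD k) (snd p)
       \<and> cptseq (DD k) (snd p) \<and> (\<forall>x\<in>DD k. (fst p)\<^sup>2 * (norm x)\<^sup>2 - Re (cinner x (snd p x)) \<le> (norm (A k x))\<^sup>2)"
  proof
    fix k assume k: "k \<in> I"
    have th: "\<eta> / (2 * \<gamma> k) > 0" using \<eta>0 gp[OF k] by simp
    have c1: "ess_red_min_mod (Hs k) (A k) \<ge> ereal (\<gamma> k)" using cond1 k by (simp add: I_def)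
    obtain g K where gK: "g \<ge> 0" "g > \<gamma> k - \<eta> / (2 * \<gamma> k)" "bounded_clinear_on (DD k) (DD k) K"
       "cptseq (DD k) K" "\<forall>x\<in>DD k. g\<^sup>2 * (norm x)\<^sup>2 - Re (cinner x (K x)) \<le> (norm (A k x))\<^sup>2"
      using erm_unpack[OF Xcc[OF k] Ab[OF k] gp[OF k] c1 th] unfolding DD_def by blast
    show "\<exists>p. fst p \<ge> 0 \<and> fst p > \<gamma> k - \<eta> / (2 * \<gamma> k) \<and> bounded_clinear_on (DD k) (DD k) (snd p)
       \<and> cptseq (DD k) (snd p) \<and> (\<forall>x\<in>DD k. (fst p)\<^sup>2 * (norm x)\<^sup>2 - Re (cinner x (snd p x)) \<le> (norm (A k x))\<^sup>2)"
      using gK by (intro exI[of _ "(g, K)"]) simp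
  qed
  then obtain P where P: "\<forall>k\<in>I. fst (P k) \<ge> 0 \<and> fst (P k) > \<gamma> k - \<eta> / (2 * \<gamma> k)
       \<and> bounded_clinear_on (DD k) (DD k) (snd (P k))
       \<and> cptseq (DD k) (snd (P k))
       \<and> (\<forall>x\<in>DD k. (fst (P k))\<^sup>2 * (norm x)\<^sup>2 - Re (cinner x (snd (P k) x)) \<le> (norm (A k x))\<^sup>2)"
    using bchoice[OF ex1] by blast
  define g where "g k = fst (P k)" for k
  define Kd where "Kd k = snd (P k)" for k
  have g2: "(g k)\<^sup>2 \<ge> (\<gamma> k)\<^sup>2 - \<eta>" if "k \<in> I" for k
    using sq_bound[OF gp[OF that] \<eta>0] P that by (simp add: g_def)
  have ex2: "\<forall>p\<in>I \<times> I. \<exists>K. fst p \<noteq> snd p \<longrightarrow> bounded_clinear_on (Hs (snd p)) (Hs (fst p)) K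
      \<and> cptseq (Hs (snd p)) K \<and> (\<forall>x\<in>Hs (fst p). \<forall>y\<in>Hs (snd p).
         - (\<epsilon> (fst p) (snd p) + \<eta>) * norm x * norm y - Re (cinner x (K y)) \<le> Re (cinner (A (fst p) x) (A (snd p) y)))"
  proof
    fix p assume p: "p \<in> I \<times> I"
    show "\<exists>K. fst p \<noteq> snd p \<longrightarrow> bounded_clinear_on (Hs (snd p)) (Hs (fst p)) K
      \<and> cptseq (Hs (snd p)) K \<and> (\<forall>x\<in>Hs (fst p). \<forall>y\<in>Hs (snd p).
         - (\<epsilon> (fst p) (snd p) + \<eta>) * norm x * norm y - Re (cinner x (K y)) \<le> Re (cinner (A (fst p) x) (A (snd p) y)))"
    proof (cases "fst p = snd p")
      case False
      have i: "fst p \<in> I" and j: "snd p \<in> I" using p by auto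
      have c2: "ess_norm (Hs (snd p)) (Hs (fst p)) (\<lambda>x. adj_on (Hs (fst p)) (A (fst p)) (A (snd p) x)) \<le> \<epsilon> (fst p) (snd p)"
        using cond2 i j False by (simp add: I_def)
      show ?thesis using cross_unpack[OF Xcc[OF i] Xcc[OF j] Ab[OF i] Ab[OF j] c2 \<eta>0] by blast
    qed simp
  qed
  then obtain KX where KX: "\<forall>p\<in>I \<times> I. fst p \<noteq> snd p \<longrightarrow> bounded_clinear_on (Hs (snd p)) (Hs (fst p)) (KX p)
      \<and> cptseq (Hs (snd p)) (KX p) \<and> (\<forall>x\<in>Hs (fst p). \<forall>y\<in>Hs (snd p).
         - (\<epsilon> (fst p) (snd p) + \<eta>) * norm x * norm y - Re (cinner x (KX p y)) \<le> Re (cinner (A (fst p) x) (A (snd p) y)))"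
    using bchoice[OF ex2] by blast
  define Kf where "Kf i j = (if i = j then Kd i else KX (i, j))" for i j
  define M' where "M' i j = (if i = j then (g i)\<^sup>2 else - (\<epsilon> i j + \<eta>))" for i j
  interpret dsum I Hs A Kf "c0 / 2"
  proof (unfold_locales)
    show "finite I" by (rule finI)
    show "\<And>k. k \<in> I \<Longrightarrow> closed_csubspace (Hs k)" by (rule Xcc)
    show "\<And>k. k \<in> I \<Longrightarrow> bounded_clinear_on (Hs k) UNIV (A k)" by (rule Ab)
    show "c0 / 2 > 0" using c0(1) by simp
  next
    fix i j assume i: "i \<in> I" and j: "j \<in> I"
    show "bounded_clinear_on (orth_diff (Hs j) (ker_on (Hs j) (A j))) UNIV (Kf i j)"
    proof (cases "i = j")
      case True
      have "bounded_clinear_on (DD j) (DD j) (Kd j)" using P j by (simp add: Kd_def)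
      thus ?thesis using True blin_restrict[of "DD j" "DD j" "Kd j" "DD j"] by (simp add: Kf_def DD_def)
    next
      case False
      have "bounded_clinear_on (Hs j) (Hs i) (KX (i, j))" using KX i j False by auto
      thus ?thesis using False blin_restrict[OF _ DDX[OF j]] by (simp add: Kf_def DD_def)
    qed
    show "cptseq (orth_diff (Hs j) (ker_on (Hs j) (A j))) (Kf i j)"
    proof (cases "i = j")
      case True
      have "cptseq (DD j) (Kd j)" using P j by (simp add: Kd_def)
      thus ?thesis using True by (simp add: Kf_def DD_def)
    next
      case False
      have "cptseq (Hs j) (KX (i, j))" using KX i j False by auto
      thus ?thesis using False cptseq_mono[OF _ DDX[OF j]] by (simp add: Kf_def DD_def)
    qed
  next
    fix x assume xD0: "\<forall>k\<in>I. x k \<in> orth_diff (Hs k) (ker_on (Hs k) (A k))"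
    have xD: "x k \<in> DD k" if "k \<in> I" for k using xD0 that by (simp add: DD_def)
    define t where "t k = norm (x k)" for k
    have tm: "M' i j * t i * t j - Re (cinner (x i) (Kf i j (x j))) \<le> Re (cinner (A i (x i)) (A j (x j)))"
      if i: "i \<in> I" and j: "j \<in> I" for i j
    proof (cases "i = j")
      case True
      have "(g i)\<^sup>2 * (norm (x i))\<^sup>2 - Re (cinner (x i) (Kd i (x i))) \<le> (norm (A i (x i)))\<^sup>2"
        using P i xD[OF i] by (simp add: g_def Kd_def)
      moreover have "Re (cinner (A i (x i)) (A i (x i))) = (norm (A i (x i)))\<^sup>2" by (simp add: norm_sq_Re)
      ultimately show ?thesis using True by (simp add: M'_def Kf_def t_def power2_eq_square mult.assoc)
    next
      case False
      have "\<forall>u\<in>Hs i. \<forall>w\<in>Hs j. - (\<epsilon> i j + \<eta>) * norm u * norm w - Re (cinner u (KX (i, j) w)) \<le> Re (cinner (A i u) (A j w))"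
        using KX i j False by auto
      moreover have "x i \<in> Hs i" "x j \<in> Hs j" using xD DDX i j by blast+
      ultimately have "- (\<epsilon> i j + \<eta>) * norm (x i) * norm (x j) - Re (cinner (x i) (KX (i, j) (x j)))
          \<le> Re (cinner (A i (x i)) (A j (x j)))" by blast
      thus ?thesis using False by (simp add: M'_def Kf_def t_def)
    qed
    have quad: "(c0 / 2) * (\<Sum>i\<in>I. (t i)\<^sup>2) \<le> (\<Sum>i\<in>I. \<Sum>j\<in>I. M' i j * t i * t j)"
    proof (rule quad_bound[OF finI c0(1) c0(2) \<eta>_def])
      show "\<forall>i\<in>I. \<forall>j\<in>I. Q i j - \<eta> \<le> M' i j" using g2 by (simp add: Q_def M'_def)
      show "\<forall>i\<in>I. 0 \<le> t i" by (simp add: t_def)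
    qed
    have "(\<Sum>i\<in>I. \<Sum>j\<in>I. M' i j * t i * t j) - (\<Sum>i\<in>I. \<Sum>j\<in>I. Re (cinner (x i) (Kf i j (x j))))
        = (\<Sum>i\<in>I. \<Sum>j\<in>I. M' i j * t i * t j - Re (cinner (x i) (Kf i j (x j))))"
      by (simp add: sum_subtractf)
    also have "\<dots> \<le> (\<Sum>i\<in>I. \<Sum>j\<in>I. Re (cinner (A i (x i)) (A j (x j))))"
      using tm by (intro sum_mono) auto
    also have "\<dots> = (norm (\<Sum>k\<in>I. A k (x k)))\<^sup>2" by (rule norm_sum_sq[symmetric])
    finally show "c0 / 2 * (\<Sum>k\<in>I. (norm (x k))\<^sup>2) \<le> (norm (\<Sum>k\<in>I. A k (x k)))\<^sup>2
           + (\<Sum>i\<in>I. \<Sum>j\<in>I. Re (cinner (x i) (Kf i j (x j))))"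
      using quad by (simp add: t_def)
  qed
  have "ess_lin_indep n (\<lambda>k. A k ` Hs k)"
    unfolding ess_lin_indep_def using indep by (simp add: I_def)
  moreover have "closed {(\<Sum>k\<in>{1..n}. A k (x k)) | x. \<forall>k\<in>{1..n}. x k \<in> Hs k}"
    using closed_range by (simp add: I_def)
  ultimately show ?thesis by blast
qed

end
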